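(* Let $G=(V,E)$ be a finite graph with a population function $p:V\to\mathbb{R}_{>0}$, let $k\ge 2$, $0<\epsilon<1$, and let $T=p(V)/k$, where $h(W)=\sum_{v\in W}h(v)$ for $W\subseteq V$ and any $h:V\to\mathbb{R}$. Let $P=\{P_1,\dots,P_k\}$ and $P'=\{P_1',\dots,P_k'\}$ be districting plans in $\mathcal{P}_{k,\epsilon}(G)$ with vertex sets $V_1,\dots,V_k$ and $V_1',\dots,V_k'$. Suppose $P'$ is a graph-preserving one-way perturbation of $P$: there are indices $i\ne j$ and a nonempty set $V_{ij}\subseteq V_i$ such that $V_i'=V_i\setminus V_{ij}$, $V_j'=V_j\cup V_{ij}$, $V_m'=V_m$ for all $m\ne i,j$, and the map $w_m\mapsto w_m'$ is an isomorphism between the district dual graphs $G_P$ and $G_{P'}$. Let $a,b:V\to\mathbb{R}$ satisfy $0\le a(v)\le b(v)\le p(v)$ and $b(v)>0$ for all $v\in V$, and for $W\subseteq V$ nonempty write $f(W)=a(W)/b(W)$; define filtration functions on the district dual graphs by $f(w_m)=f(V_m)$ and $f(w_m')=f(V_m')$. Let $\alpha>0$ satisfy $b(W)/p(W)\ge \alpha$ for $W=V_i,V_i',V_j,V_j'$. Let $\mathcal{D}_P$ and $\mathcal{D}_{P'}$ be the degree-$0$ persistence diagrams of the sublevel-set filtrations of $G_P$ and $G_{P'}$ induced by $f$. Then $$d_\infty(\mathcal{D}_P,\mathcal{D}_{P'})\le \frac{2\epsilon}{\alpha(1-\epsilon)}\max\Bigl(\bigl|f(V_{ij})-f(V_i)\bigr|,\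 \bigl|f(V_{ij})-f(V_j)\bigr|\Bigr).$$
   Context: Districting plans: $\mathcal{P}_{k,\epsilon}(G)$ is the set of partitions $P=\{P_1,\dots,P_k\}$ of $G$ into induced subgraphs $P_m=(V_m,E_m)$ on a vertex partition $V=V_1\sqcup\dots\sqcup V_k$, with each $P_m$ connected and $(1-\epsilon)T\le p(V_m)\le(1+\epsilon)T$. District dual graph $G_P$: vertices $w_1,\dots,w_k$ (one per district), with $w_m,w_l$ adjacent iff some edge of $E$ joins $V_m$ and $V_l$. Sublevel-set filtration and degree-0 persistence diagram: for a finite graph $H$ with vertex function $F$, for each $t$ let $H^t$ be the subgraph induced on vertices with $F\le t$ (edges appear once both endpoints are present); the diagram $\mathcal{D}_F$ is the multiset of (birth, death) pairs $(b,d)$, $d\in\mathbb{R}\cup\{\infty\}$, of connected components of $H^t$ as $t$ increases, with the elder rule (on merging, the younger component dies) and $d=\infty$ for components that never die; diagonal points may be ignored. Bottleneck distance $d_\infty$: infimum over partial bijections $\phi$ between the diagrams of the maximum of $\|x-\phi(x)\|_\infty$ over matched points and of the $\ell_\infty$ distance to the diagonal (i.e.\ $(d-b)/2$) over unmatched points, with $\infty-\infty=0$. *)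

theory Defs
  imports Complex_Main "HOL-Library.Multiset" "HOL-Library.Extended_Real"
begin

definition induced_rel :: "'a set \<Rightarrow> ('a \<Rightarrow> 'a \<Rightarrow> bool) \<Rightarrow> 'a \<Rightarrow> 'a \<Rightarrow> bool" where
  "induced_rel S E u v \<longleftrightarrow> u \<in> S \<and> v \<in> S \<and> E u v"

definition connected_set :: "'a set \<Rightarrow> ('a \<Rightarrow> 'a \<Rightarrow> bool) \<Rightarrow> bool" where
  "connected_set S E \<longleftrightarrow> S \<noteq> {} \<and> (\<forall>u\<in>S. \<forall>v\<in>S. (induced_rel S E)\<^sup>*\<^sup>* u v)"

definition components :: "'a set \<Rightarrow> ('a \<Rightarrow> 'a \<Rightarrow> bool) \<Rightarrow> 'a set set" where
  "components S E = (\<lambda>u. {v \<in> S. (induced_rel S E)\<^sup>*\<^sup>* u v}) ` S"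

definition districting_plan ::
  "'v set \<Rightarrow> ('v \<Rightarrow> 'v \<Rightarrow> bool) \<Rightarrow> ('v \<Rightarrow> real) \<Rightarrow> nat \<Rightarrow> real \<Rightarrow> (nat \<Rightarrow> 'v set) \<Rightarrow> bool" where
  "districting_plan V E p k \<epsilon> VV \<longleftrightarrow>
     (\<Union>m<k. VV m) = V \<and>
     (\<forall>m<k. \<forall>l<k. m \<noteq> l \<longrightarrow> VV m \<inter> VV l = {}) \<and>
     (\<forall>m<k. connected_set (VV m) E) \<and>
     (\<forall>m<k. (1 - \<epsilon>) * (sum p V / real k) \<le> sum p (VV m)
            \<and> sum p (VV m) \<le> (1 + \<epsilon>) * (sum p V / real k))"

text \<open>Adjacency in the district dual graph G_P (vertices w_0..w_(k-1) = indices m < k).\<close>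
definition dual_adj :: "('v \<Rightarrow> 'v \<Rightarrow> bool) \<Rightarrow> (nat \<Rightarrow> 'v set) \<Rightarrow> nat \<Rightarrow> nat \<Rightarrow> bool" where
  "dual_adj E VV m l \<longleftrightarrow> m \<noteq> l \<and> (\<exists>u\<in>VV m. \<exists>v\<in>VV l. E u v)"

definition sublevel :: "'a set \<Rightarrow> ('a \<Rightarrow> real) \<Rightarrow> real \<Rightarrow> 'a set" where
  "sublevel H F t = {v \<in> H. F v \<le> t}"

definition strict_sublevel :: "'a set \<Rightarrow> ('a \<Rightarrow> real) \<Rightarrow> real \<Rightarrow> 'a set" where
  "strict_sublevel H F t = {v \<in> H. F v < t}"

definition merged_births :: "'a set \<Rightarrow> ('a \<Rightarrow> 'a \<Rightarrow> bool) \<Rightarrow> ('a \<Rightarrow> real) \<Rightarrow> real \<Rightarrow> 'a set \<Rightarrow> real multiset" where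
  "merged_births H E F t C =
     image_mset (\<lambda>c. Min (F ` c)) (mset_set {c \<in> components (strict_sublevel H F t) E. c \<subseteq> C})"

text \<open>Elder rule: at level t, inside each component C of H^t, all merging older components
  except one oldest die at t; each component of H lives forever from its minimal value.
  Points on the diagonal are omitted.\<close>
definition pd0 :: "'a set \<Rightarrow> ('a \<Rightarrow> 'a \<Rightarrow> bool) \<Rightarrow> ('a \<Rightarrow> real) \<Rightarrow> (real \<times> ereal) multiset" where
  "pd0 H E F =
     (\<Sum>C\<in>components H E. {# (Min (F ` C), PInfty) #}) +
     (\<Sum>t\<in>F ` H. \<Sum>C\<in>components (sublevel H F t) E.
        image_mset (\<lambda>b. (b, ereal t))
          (merged_births H E F t C - {# Min (set_mset (merged_births H E F t C)) #}))"

definition edist :: "ereal \<Rightarrow> ereal \<Rightarrow> ereal" where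
  "edist x y = (if x = y then 0 else \<bar>x - y\<bar>)"   (* \<infinity> - \<infinity> = 0 *)

definition pt_dist :: "real \<times> ereal \<Rightarrow> real \<times> ereal \<Rightarrow> ereal" where
  "pt_dist x y = max (ereal \<bar>fst x - fst y\<bar>) (edist (snd x) (snd y))"

definition diag_dist :: "real \<times> ereal \<Rightarrow> ereal" where
  "diag_dist x = (snd x - ereal (fst x)) / 2"

text \<open>Partial bijection between diagrams = multiset of matched pairs.\<close>
definition partial_matching ::
  "(real \<times> ereal) multiset \<Rightarrow> (real \<times> ereal) multiset \<Rightarrow> ((real \<times> ereal) \<times> (real \<times> ereal)) multiset \<Rightarrow> bool" where
  "partial_matching D1 D2 M \<longleftrightarrow> image_mset fst M \<subseteq># D1 \<and> image_mset snd M \<subseteq># D2"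

definition matching_cost ::
  "(real \<times> ereal) multiset \<Rightarrow> (real \<times> ereal) multiset \<Rightarrow> ((real \<times> ereal) \<times> (real \<times> ereal)) multiset \<Rightarrow> ereal" where
  "matching_cost D1 D2 M = Sup ({0}
      \<union> (\<lambda>xy. pt_dist (fst xy) (snd xy)) ` set_mset M
      \<union> diag_dist ` set_mset (D1 - image_mset fst M)
      \<union> diag_dist ` set_mset (D2 - image_mset snd M))"

definition bottleneck :: "(real \<times> ereal) multiset \<Rightarrow> (real \<times> ereal) multiset \<Rightarrow> ereal" where
  "bottleneck D1 D2 = Inf (matching_cost D1 D2 ` {M. partial_matching D1 D2 M})"

definition ratio :: "('v \<Rightarrow> real) \<Rightarrow> ('v \<Rightarrow> real) \<Rightarrow> 'v set \<Rightarrow> real" where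
  "ratio a b W = sum a W / sum b W"

end

theory Submission
  imports Defs "HOL-Library.Product_Lexorder"
begin

abbreviation RR :: "'a set \<Rightarrow> ('a \<Rightarrow> 'a \<Rightarrow> bool) \<Rightarrow> 'a \<Rightarrow> 'a \<Rightarrow> bool" where
  "RR S E \<equiv> (induced_rel S E)\<^sup>*\<^sup>*"

definition symE :: "('a \<Rightarrow> 'a \<Rightarrow> bool) \<Rightarrow> bool" where
  "symE E \<longleftrightarrow> (\<forall>u v. E u v \<longrightarrow> E v u)"

lemma RR_sym: assumes "symE E" "RR S E u v" shows "RR S E v u"
  using assms(2)
proof (induction rule: rtranclp_induct)
  case base then show ?case by simp
next
  case (step y z)
  have "induced_rel S E z y" using step(2) assms(1) unfolding induced_rel_def symE_def by auto
  then show ?case using step(3) by (meson converse_rtranclp_into_rtranclp)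
qed

lemma RR_mono: assumes "S \<subseteq> S'" "RR S E u v" shows "RR S' E u v"
  using assms(2)
proof (induction rule: rtranclp_induct)
  case base then show ?case by simp
next
  case (step y z)
  have "induced_rel S' E y z" using step(2) assms(1) unfolding induced_rel_def by auto
  then show ?case using step(3) by (meson rtranclp.rtrancl_into_rtrancl)
qed

lemma RR_mem: assumes "RR S E u v" "u \<noteq> v" shows "u \<in> S \<and> v \<in> S"
  using assms
proof (induction rule: rtranclp_induct)
  case base then show ?case by simp
next
  case (step y z)
  then show ?case unfolding induced_rel_def by (cases "u = y") auto
qed

lemma RR_trans: "RR S E u v \<Longrightarrow> RR S E v w \<Longrightarrow> RR S E u w"
  by (rule rtranclp_trans)

lemma RR_cong: assumes "S \<subseteq> H" "\<forall>u\<in>H. \<forall>v\<in>H. E1 u v = E2 u v"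
  shows "induced_rel S E1 = induced_rel S E2"
  using assms unfolding induced_rel_def by (auto simp: fun_eq_iff)

definition comp :: "'a set \<Rightarrow> ('a \<Rightarrow> 'a \<Rightarrow> bool) \<Rightarrow> 'a \<Rightarrow> 'a set" where
  "comp S E v = {u \<in> S. RR S E v u}"

lemma components_comp: "components S E = comp S E ` S"
  unfolding components_def comp_def by simp

lemma comp_self: "v \<in> S \<Longrightarrow> v \<in> comp S E v"
  unfolding comp_def by simp

lemma comp_eq: assumes "symE E" "x \<in> comp S E v" shows "comp S E x = comp S E v"
proof -
  have r: "RR S E v x" using assms(2) unfolding comp_def by simp
  have r2: "RR S E x v" using RR_sym[OF assms(1) r] .
  show ?thesis unfolding comp_def
  proof (intro Collect_cong conj_cong refl iffI)
    fix u assume "RR S E x u" then show "RR S E v u" using r by (meson rtranclp_trans)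
  next
    fix u assume "RR S E v u" then show "RR S E x u" using r2 by (meson rtranclp_trans)
  qed
qed

lemma comp_sub: "comp S E v \<subseteq> S" unfolding comp_def by auto

lemma components_mem: assumes "symE E" "C \<in> components S E" "x \<in> C"
  shows "C = comp S E x"
proof -
  obtain v where v: "v \<in> S" "C = comp S E v" using assms(2) unfolding components_comp by auto
  show ?thesis using comp_eq[OF assms(1), of x S v] v assms(3) by simp
qed

lemma components_disj: assumes "symE E" "C1 \<in> components S E" "C2 \<in> components S E" "x \<in> C1" "x \<in> C2"
  shows "C1 = C2"
  using components_mem[OF assms(1,2,4)] components_mem[OF assms(1,3,5)] by (rule trans_sym)

lemma components_sub: assumes "C \<in> components S E" shows "C \<subseteq> S"
proof -
  obtain v where "C = comp S E v" using assms unfolding components_comp by auto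
  then show ?thesis using comp_sub by simp
qed

lemma components_ne: assumes "C \<in> components S E" shows "C \<noteq> {}"
proof -
  obtain v where "v \<in> S" "C = comp S E v" using assms unfolding components_comp by auto
  then show ?thesis using comp_self[of v S E] by auto
qed

lemma comp_in_components: "x \<in> S \<Longrightarrow> comp S E x \<in> components S E"
  unfolding components_comp by simp

lemma finite_components: "finite S \<Longrightarrow> finite (components S E)"
  unfolding components_comp by simp

lemma components_finite: "finite S \<Longrightarrow> C \<in> components S E \<Longrightarrow> finite C"
  using components_sub finite_subset by metis

definition key :: "(nat \<Rightarrow> real) \<Rightarrow> nat \<Rightarrow> real \<times> nat" where
  "key K u = (K u, u)"

lemma key_inj: "key K u = key K v \<Longrightarrow> u = v" unfolding key_def by simp

definition kmin :: "(nat \<Rightarrow> real) \<Rightarrow> nat set \<Rightarrow> nat" where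
  "kmin K C = snd (Min (key K ` C))"

definition kmax :: "(nat \<Rightarrow> real) \<Rightarrow> nat set \<Rightarrow> nat" where
  "kmax K C = snd (Max (key K ` C))"

lemma kmin: assumes "finite C" "C \<noteq> {}"
  shows "kmin K C \<in> C" "\<And>x. x \<in> C \<Longrightarrow> key K (kmin K C) \<le> key K x"
proof -
  have "Min (key K ` C) \<in> key K ` C" using assms by simp
  then obtain u where u: "u \<in> C" "Min (key K ` C) = key K u" by auto
  have k: "kmin K C = u" unfolding kmin_def u(2) key_def by simp
  show "kmin K C \<in> C" using k u by simp
  show "\<And>x. x \<in> C \<Longrightarrow> key K (kmin K C) \<le> key K x" using k u assms by (metis Min_le finite_imageI imageI)
qed

lemma kmax: assumes "finite C" "C \<noteq> {}"
  shows "kmax K C \<in> C" "\<And>x. x \<in> C \<Longrightarrow> key K x \<le> key K (kmax K C)"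
proof -
  have "Max (key K ` C) \<in> key K ` C" using assms by simp
  then obtain u where u: "u \<in> C" "Max (key K ` C) = key K u" by auto
  have k: "kmax K C = u" unfolding kmax_def u(2) key_def by simp
  show "kmax K C \<in> C" using k u by simp
  show "\<And>x. x \<in> C \<Longrightarrow> key K x \<le> key K (kmax K C)" using k u assms by (metis Max_ge finite_imageI imageI)
qed

lemma key_le_neq: "key K u \<le> key K v \<Longrightarrow> u \<noteq> v \<Longrightarrow> key K u < key K v"
  using key_inj order_le_neq_trans by blast


section \<open>Vertex-indexed diagrams\<close>

definition pre :: "nat set \<Rightarrow> (nat \<Rightarrow> real) \<Rightarrow> nat \<Rightarrow> nat set" where
  "pre H K w = {x \<in> H. key K x \<le> key K w}"

definition Wset :: "nat set \<Rightarrow> (nat \<Rightarrow> nat \<Rightarrow> bool) \<Rightarrow> (nat \<Rightarrow> real) \<Rightarrow> nat \<Rightarrow> nat set" where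
  "Wset H E K v = {w \<in> H. \<exists>u\<in>H. key K u < key K v \<and> RR (pre H K w) E v u}"

definition death :: "nat set \<Rightarrow> (nat \<Rightarrow> nat \<Rightarrow> bool) \<Rightarrow> (nat \<Rightarrow> real) \<Rightarrow> (nat \<Rightarrow> real) \<Rightarrow> nat \<Rightarrow> ereal" where
  "death H E K G v = (if Wset H E K v = {} then PInfty else ereal (Min (G ` Wset H E K v)))"

definition Pt :: "nat set \<Rightarrow> (nat \<Rightarrow> nat \<Rightarrow> bool) \<Rightarrow> (nat \<Rightarrow> real) \<Rightarrow> (nat \<Rightarrow> real) \<Rightarrow> nat \<Rightarrow> real \<times> ereal" where
  "Pt H E K G v = (G v, death H E K G v)"

definition offd :: "nat set \<Rightarrow> (nat \<Rightarrow> real \<times> ereal) \<Rightarrow> (real \<times> ereal) multiset" where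
  "offd H P = image_mset P (mset_set {v \<in> H. snd (P v) \<noteq> ereal (fst (P v))})"

definition compat :: "nat set \<Rightarrow> (nat \<Rightarrow> real) \<Rightarrow> (nat \<Rightarrow> real) \<Rightarrow> bool" where
  "compat H K G \<longleftrightarrow> (\<forall>u\<in>H. \<forall>v\<in>H. key K u < key K v \<longrightarrow> G u \<le> G v)"

lemma img_sum: "image_mset f (mset_set A) = (\<Sum>a\<in>A. {#f a#})"
proof (cases "finite A")
  case True then show ?thesis by (induction A rule: finite_induct) auto
qed simp

locale LA =
  fixes H :: "nat set" and E :: "nat \<Rightarrow> nat \<Rightarrow> bool" and K G :: "nat \<Rightarrow> real"
  assumes finH: "finite H" and symE: "symE E" and compat: "compat H K G"
begin

abbreviation "W \<equiv> Wset H E K"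
abbreviation "d v \<equiv> Min (G ` W v)"
abbreviation "sub t \<equiv> sublevel H G t"
abbreviation "ssub t \<equiv> strict_sublevel H G t"

lemma compat_le: "u \<in> H \<Longrightarrow> v \<in> H \<Longrightarrow> key K u \<le> key K v \<Longrightarrow> G u \<le> G v"
  using compat key_inj unfolding compat_def by (metis order.order_iff_strict order.refl)

lemma W_sub: "W v \<subseteq> H" unfolding Wset_def by auto

lemma finW: "finite (W v)" using W_sub finH finite_subset by metis

lemma W_pre: assumes "w \<in> W v" shows "v \<in> pre H K w" "G v \<le> G w" "v \<in> H"
proof -
  obtain u where u: "u \<in> H" "key K u < key K v" "RR (pre H K w) E v u" using assms unfolding Wset_def by auto
  have "u \<noteq> v" using u(2) by auto
  then show vp: "v \<in> pre H K w" using RR_mem[OF u(3)] by auto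
  then show "v \<in> H" unfolding pre_def by auto
  show "G v \<le> G w" using vp compat_le assms W_sub unfolding pre_def by auto
qed

lemma pre_G: "w \<in> H \<Longrightarrow> x \<in> pre H K w \<Longrightarrow> G x \<le> G w"
  using compat_le unfolding pre_def by auto

lemma sub_pre: assumes "S \<subseteq> H" "S \<noteq> {}" shows "S \<subseteq> pre H K (kmax K S)"
  using kmax[where C=S and K=K] assms finH finite_subset unfolding pre_def by blast

lemma kmax_in: assumes "S \<subseteq> H" "S \<noteq> {}" shows "kmax K S \<in> S"
  using kmax[where C=S and K=K] assms finH finite_subset by blast

lemma d_ge: "W v \<noteq> {} \<Longrightarrow> G v \<le> d v"
  using W_pre(2) finW by (simp add: Min_ge_iff)

lemma d_in: "W v \<noteq> {} \<Longrightarrow> \<exists>w\<in>W v. G w = d v"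
proof -
  assume a: "W v \<noteq> {}"
  have "d v \<in> G ` W v" using a finW by (intro Min_in) auto
  then show ?thesis by auto
qed

lemma sub_H: "sub t \<subseteq> H" "ssub t \<subseteq> H" unfolding sublevel_def strict_sublevel_def by auto
lemma ssub_sub: "ssub t \<subseteq> sub t" unfolding sublevel_def strict_sublevel_def by auto

lemma finsub: "C \<subseteq> H \<Longrightarrow> finite C" using finH finite_subset by metis

lemma kmin_G: assumes "C \<subseteq> H" "C \<noteq> {}" "x \<in> C" shows "G (kmin K C) \<le> G x"
proof -
  have "kmin K C \<in> C" "key K (kmin K C) \<le> key K x"
    using kmin[where C=C and K=K] assms finsub[OF assms(1)] by auto
  then show ?thesis using compat_le assms by blast
qed

lemma kmin_Min: assumes "C \<subseteq> H" "C \<noteq> {}" shows "G (kmin K C) = Min (G ` C)"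
proof -
  have fC: "finite C" using assms finH finite_subset by metis
  have "kmin K C \<in> C" using kmin[OF fC assms(2)] by simp
  show ?thesis
  proof (rule Min_eqI[symmetric])
    show "finite (G ` C)" using fC by simp
    show "\<And>y. y \<in> G ` C \<Longrightarrow> G (kmin K C) \<le> y" using kmin_G[OF assms] by auto
    show "G (kmin K C) \<in> G ` C" using \<open>kmin K C \<in> C\<close> by simp
  qed
qed


definition Fin where "Fin = {v\<in>H. W v \<noteq> {} \<and> d v \<noteq> G v}"
definition piece where "piece t C = {v \<in> Fin. d v = t \<and> v \<in> C}"

lemma RR_pre: assumes "S \<subseteq> H" "S \<noteq> {}" "RR S E v u" shows "RR (pre H K (kmax K S)) E v u"
  using RR_mono[OF sub_pre[OF assms(1,2)] assms(3)] .

lemma char1: assumes C: "C \<in> components (sub t) E" and v: "v \<in> piece t C"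
  shows "v \<in> C" "G v < t" "v = kmin K (comp (ssub t) E v)" "v \<noteq> kmin K C"
proof -
  have vH: "v \<in> H" and Wne: "W v \<noteq> {}" and dne: "d v \<noteq> G v" and dt: "d v = t" and vC: "v \<in> C"
    using v unfolding piece_def Fin_def by auto
  show "v \<in> C" by fact
  show Gvt: "G v < t" using d_ge[OF Wne] dne dt by simp
  have vs: "v \<in> ssub t" using vH Gvt unfolding strict_sublevel_def by simp
  define c where "c = comp (ssub t) E v"
  have cH: "c \<subseteq> H" using comp_sub[of "ssub t" E v] sub_H unfolding c_def by blast
  have vc: "v \<in> c" using comp_self[OF vs] unfolding c_def .
  have m'c: "kmin K c \<in> c" and m'le: "key K (kmin K c) \<le> key K v"
    using kmin[where C=c and K=K] finsub[OF cH] vc by auto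
  show "v = kmin K (comp (ssub t) E v)"
  proof (rule ccontr)
    assume "v \<noteq> kmin K (comp (ssub t) E v)"
    then have lt: "key K (kmin K c) < key K v" using m'le key_le_neq unfolding c_def by metis
    have r: "RR (ssub t) E v (kmin K c)" using m'c unfolding c_def comp_def by auto
    have sne: "ssub t \<noteq> {}" using vs by auto
    define w where "w = kmax K (ssub t)"
    have wS: "w \<in> ssub t" using kmax_in[OF sub_H(2) sne] unfolding w_def .
    have r2: "RR (pre H K w) E v (kmin K c)" using RR_pre[OF sub_H(2) sne r] unfolding w_def .
    have "w \<in> W v" unfolding Wset_def using wS sub_H(2) m'c cH lt r2 by blast
    then have "d v \<le> G w" using finW by simp
    moreover have "G w < t" using wS unfolding strict_sublevel_def by simp
    ultimately show False using dt by simp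
  qed
  obtain w where w: "w \<in> W v" "G w = t" using d_in[OF Wne] dt by auto
  obtain u where u: "u \<in> H" "key K u < key K v" "RR (pre H K w) E v u" using w(1) unfolding Wset_def by auto
  have wH: "w \<in> H" using w(1) W_sub by auto
  have "pre H K w \<subseteq> sub t" using pre_G[OF wH] w(2) unfolding sublevel_def pre_def by auto
  then have r: "RR (sub t) E v u" using RR_mono u(3) by metis
  have Ceq: "C = comp (sub t) E v" using components_mem[OF symE C vC] .
  have "u \<noteq> v" using u(2) by auto
  then have uC: "u \<in> C" using RR_mem[OF r] r unfolding Ceq comp_def by auto
  have CH: "C \<subseteq> H" using components_sub[OF C] sub_H by blast
  have "key K (kmin K C) \<le> key K u" using kmin[where C=C and K=K] finsub[OF CH] uC by auto
  then show "v \<noteq> kmin K C" using u(2) by auto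
qed

lemma char2: assumes C: "C \<in> components (sub t) E" and vC: "v \<in> C" and Gvt: "G v < t"
    and vmin: "v = kmin K (comp (ssub t) E v)" and vne: "v \<noteq> kmin K C"
  shows "v \<in> piece t C"
proof -
  have CH: "C \<subseteq> H" using components_sub[OF C] sub_H by blast
  have vH: "v \<in> H" using CH vC by auto
  have fC: "finite C" using finsub[OF CH] .
  define m where "m = kmin K C"
  have mC: "m \<in> C" and mle: "key K m \<le> key K v" using kmin[where C=C and K=K] fC vC unfolding m_def by auto
  have mlt: "key K m < key K v" using mle vne key_le_neq unfolding m_def by metis
  have Ceq: "C = comp (sub t) E v" using components_mem[OF symE C vC] .
  have r: "RR (sub t) E v m" using mC unfolding Ceq comp_def by auto
  have vsub: "v \<in> sub t" using components_sub[OF C] vC by auto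
  have sne: "sub t \<noteq> {}" using vsub by auto
  define w where "w = kmax K (sub t)"
  have wS: "w \<in> sub t" using kmax_in[OF sub_H(1) sne] unfolding w_def .
  have r2: "RR (pre H K w) E v m" using RR_pre[OF sub_H(1) sne r] unfolding w_def .
  have mH: "m \<in> H" using mC CH by auto
  have wW: "w \<in> W v" unfolding Wset_def using wS sub_H(1) mH mlt r2 by blast
  have Gw: "G w \<le> t" using wS unfolding sublevel_def by simp
  have ge: "t \<le> G w'" if w': "w' \<in> W v" for w'
  proof (rule ccontr)
    assume "\<not> t \<le> G w'"
    then have lt: "G w' < t" by simp
    obtain u where u: "u \<in> H" "key K u < key K v" "RR (pre H K w') E v u" using w' unfolding Wset_def by auto
    have w'H: "w' \<in> H" using w' W_sub by auto
    have "pre H K w' \<subseteq> ssub t" using pre_G[OF w'H] lt unfolding strict_sublevel_def pre_def by force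
    then have r: "RR (ssub t) E v u" using RR_mono u(3) by metis
    have "u \<noteq> v" using u(2) by auto
    then have uc: "u \<in> comp (ssub t) E v" using RR_mem[OF r] r unfolding comp_def by auto
    have cH: "comp (ssub t) E v \<subseteq> H" using comp_sub[of "ssub t" E v] sub_H by blast
    have "key K (kmin K (comp (ssub t) E v)) \<le> key K u"
      using kmin[where C="comp (ssub t) E v" and K=K] finsub[OF cH] uc by auto
    then show False using u(2) vmin by simp
  qed
  have Wne: "W v \<noteq> {}" using wW by auto
  have "d v = t"
  proof (rule antisym)
    show "d v \<le> t" using Min_le[OF _ imageI[OF wW, of G]] finW Gw by (meson finite_imageI order_trans)
    show "t \<le> d v" using ge finW Wne by (simp add: Min_ge_iff)
  qed
  then show ?thesis unfolding piece_def Fin_def using vH Wne Gvt vC by auto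
qed

lemma comp_ssub_sub: assumes "v \<in> ssub t" shows "comp (ssub t) E v \<subseteq> comp (sub t) E v"
  using RR_mono[OF ssub_sub] unfolding comp_def using ssub_sub by blast

lemma piece_Pt: assumes C: "C \<in> components (sub t) E" and v: "v \<in> piece t C"
  shows "Pt H E K G v = (G v, ereal t)"
  using v unfolding piece_def Fin_def Pt_def death_def by auto

lemma piece_mset: assumes C: "C \<in> components (sub t) E"
  shows "image_mset (\<lambda>b. (b, ereal t)) (merged_births H E G t C - {#Min (set_mset (merged_births H E G t C))#})
    = image_mset (Pt H E K G) (mset_set (piece t C))"
proof -
  define cs where "cs = {c \<in> components (ssub t) E. c \<subseteq> C}"
  have MB: "merged_births H E G t C = image_mset (\<lambda>c. Min (G ` c)) (mset_set cs)"
    unfolding merged_births_def cs_def by simp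
  have fcs: "finite cs" unfolding cs_def using finite_components[of "ssub t" E] finsub[OF sub_H(2)] by auto
  have CH: "C \<subseteq> H" using components_sub[OF C] sub_H by blast
  have Cne: "C \<noteq> {}" using components_ne[OF C] .
  have compin: "comp (ssub t) E v \<in> cs" if "v \<in> C" "G v < t" for v
  proof -
    have vs: "v \<in> ssub t" using that CH unfolding strict_sublevel_def by auto
    have "C = comp (sub t) E v" using components_mem[OF symE C that(1)] .
    then show ?thesis unfolding cs_def using comp_ssub_sub[OF vs] comp_in_components[OF vs] by auto
  qed
  show ?thesis
  proof (cases "cs = {}")
    case True
    have "piece t C = {}"
    proof (rule ccontr)
      assume "piece t C \<noteq> {}"
      then obtain v where "v \<in> piece t C" by auto
      then have "comp (ssub t) E v \<in> cs" using char1(1,2)[OF C] compin by metis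
      then show False using True by simp
    qed
    then show ?thesis using MB True by simp
  next
    case False
    then obtain c1 where c1: "c1 \<in> cs" by auto
    obtain x where x: "x \<in> c1" using components_ne[of c1 "ssub t" E] c1 unfolding cs_def by auto
    have xs: "x \<in> ssub t" using components_sub[of c1 "ssub t" E] c1 x unfolding cs_def by auto
    have xC: "x \<in> C" using c1 x unfolding cs_def by auto
    define m where "m = kmin K C"
    have mC: "m \<in> C" using kmin[where C=C and K=K] finsub[OF CH] Cne unfolding m_def by auto
    have Gm: "G m \<le> G x" using kmin_G[OF CH Cne xC] unfolding m_def .
    have Gmt: "G m < t" using Gm xs unfolding strict_sublevel_def by simp
    have ms: "m \<in> ssub t" using Gmt mC CH unfolding strict_sublevel_def by auto
    define c0 where "c0 = comp (ssub t) E m"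
    have c0cs: "c0 \<in> cs" using compin[OF mC Gmt] unfolding c0_def .
    have csH: "c \<subseteq> H" "c \<noteq> {}" "c \<subseteq> C" if "c \<in> cs" for c
      using that components_sub[of c "ssub t" E] components_ne[of c "ssub t" E] sub_H(2)[of t] unfolding cs_def by auto
    have Mc: "Min (G ` c) \<ge> G m" if "c \<in> cs" for c
    proof -
      have "kmin K c \<in> c" using kmin[where C=c and K=K] finsub csH[OF that] by auto
      then have "G m \<le> G (kmin K c)" using kmin_G[OF CH Cne] csH[OF that] unfolding m_def by auto
      then show ?thesis using kmin_Min[OF csH(1,2)[OF that]] by simp
    qed
    have Mc0: "Min (G ` c0) = G m"
    proof -
      have "m \<in> c0" unfolding c0_def using comp_self[OF ms] .
      then have "Min (G ` c0) \<le> G m" using finsub[OF csH(1)[OF c0cs]] by simp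
      then show ?thesis using Mc[OF c0cs] by simp
    qed
    have sm: "set_mset (merged_births H E G t C) = (\<lambda>c. Min (G ` c)) ` cs"
      unfolding MB using fcs by simp
    have Mset: "Min (set_mset (merged_births H E G t C)) = G m"
      unfolding sm
    proof (rule Min_eqI)
      show "finite ((\<lambda>c. Min (G ` c)) ` cs)" using fcs by simp
      show "\<And>y. y \<in> (\<lambda>c. Min (G ` c)) ` cs \<Longrightarrow> G m \<le> y" using Mc by blast
      show "G m \<in> (\<lambda>c. Min (G ` c)) ` cs" using Mc0 c0cs by (metis imageI)
    qed
    have ms_eq: "mset_set cs = add_mset c0 (mset_set (cs - {c0}))"
      using mset_set.remove[OF fcs c0cs] .
    have MBd: "merged_births H E G t C - {#G m#} = image_mset (\<lambda>c. Min (G ` c)) (mset_set (cs - {c0}))"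
      unfolding MB ms_eq using Mc0 by simp
    have pc: "piece t C = kmin K ` (cs - {c0})"
    proof (intro equalityI subsetI)
      fix v assume v: "v \<in> piece t C"
      note ch = char1[OF C v]
      have ccs: "comp (ssub t) E v \<in> cs" using compin ch(1,2) .
      have "comp (ssub t) E v \<noteq> c0"
      proof
        assume eq: "comp (ssub t) E v = c0"
        have "m \<in> comp (ssub t) E v" using eq comp_self[OF ms] unfolding c0_def by simp
        then have "key K v \<le> key K m" using kmin[where C="comp (ssub t) E v" and K=K] finsub csH(1)[OF ccs] ch(3)
          by (metis empty_iff)
        moreover have "key K m \<le> key K v" using kmin[where C=C and K=K] finsub[OF CH] ch(1) unfolding m_def by auto
        ultimately show False using ch(4) key_inj unfolding m_def by (metis order.antisym)
      qed
      then show "v \<in> kmin K ` (cs - {c0})" using ccs ch(3) by (metis DiffI imageI singletonD)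
    next
      fix v assume "v \<in> kmin K ` (cs - {c0})"
      then obtain c where c: "c \<in> cs" "c \<noteq> c0" "v = kmin K c" by auto
      have vc: "v \<in> c" using kmin(1)[OF finsub[OF csH(1)[OF c(1)]] csH(2)[OF c(1)]] c(3) by simp
      have vC: "v \<in> C" using vc csH(3)[OF c(1)] by auto
      have vs: "v \<in> ssub t" using vc c(1) components_sub[of c "ssub t" E] unfolding cs_def by auto
      have Gvt: "G v < t" using vs unfolding strict_sublevel_def by simp
      have ceq: "c = comp (ssub t) E v" using components_mem[OF symE _ vc] c(1) unfolding cs_def by auto
      have "v \<noteq> kmin K C" using c(2) ceq unfolding c0_def m_def by auto
      then show "v \<in> piece t C" using char2[OF C vC Gvt c(3)[unfolded ceq]] by simp
    qed
    have inj: "inj_on (kmin K) (cs - {c0})"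
    proof (rule inj_onI)
      fix c1 c2 assume a: "c1 \<in> cs - {c0}" "c2 \<in> cs - {c0}" "kmin K c1 = kmin K c2"
      have k1: "kmin K c1 \<in> c1" using kmin(1)[OF finsub[OF csH(1)] csH(2)] a(1) by simp
      have k2: "kmin K c1 \<in> c2" using kmin(1)[OF finsub[OF csH(1)] csH(2)] a(2,3) by simp
      have "c1 \<in> components (ssub t) E" "c2 \<in> components (ssub t) E" using a(1,2) unfolding cs_def by auto
      then show "c1 = c2" using components_disj[OF symE _ _ k1 k2] by simp
    qed
    have "image_mset (Pt H E K G) (mset_set (piece t C))
        = image_mset (Pt H E K G \<circ> kmin K) (mset_set (cs - {c0}))"
      unfolding pc image_mset_mset_set[OF inj, symmetric] by (simp add: multiset.map_comp)
    also have "\<dots> = image_mset (\<lambda>c. (Min (G ` c), ereal t)) (mset_set (cs - {c0}))"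
    proof (rule image_mset_cong)
      fix c assume "c \<in># mset_set (cs - {c0})"
      then have c: "c \<in> cs - {c0}" using fcs by simp
      have "kmin K c \<in> piece t C" using pc c by auto
      then show "(Pt H E K G \<circ> kmin K) c = (Min (G ` c), ereal t)"
        using piece_Pt[OF C] kmin_Min csH c by auto
    qed
    finally show ?thesis unfolding Mset MBd by (simp add: multiset.map_comp o_def)
  qed
qed

lemma ess_char: assumes vH: "v \<in> H" shows "W v = {} \<longleftrightarrow> v = kmin K (comp H E v)"
proof
  have cH: "comp H E v \<subseteq> H" using comp_sub .
  have vc: "v \<in> comp H E v" using comp_self[OF vH] .
  have fc: "finite (comp H E v)" using finsub[OF cH] .
  define m where "m = kmin K (comp H E v)"
  have mc: "m \<in> comp H E v" and mle: "key K m \<le> key K v" using kmin[where C="comp H E v" and K=K] fc vc unfolding m_def by auto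
  assume W0: "W v = {}"
  show "v = kmin K (comp H E v)"
  proof (rule ccontr)
    assume "v \<noteq> kmin K (comp H E v)"
    then have lt: "key K m < key K v" using mle key_le_neq unfolding m_def by metis
    have r: "RR H E v m" using mc unfolding comp_def by simp
    have Hne: "H \<noteq> {}" using vH by auto
    have r2: "RR (pre H K (kmax K H)) E v m" using RR_pre[OF order.refl Hne r] .
    have "kmax K H \<in> W v" unfolding Wset_def using kmax_in[OF order.refl Hne] mc cH lt r2 by blast
    then show False using W0 by simp
  qed
next
  assume vm: "v = kmin K (comp H E v)"
  show "W v = {}"
  proof (rule ccontr)
    assume "W v \<noteq> {}"
    then obtain w where "w \<in> W v" by auto
    then obtain u where u: "u \<in> H" "key K u < key K v" "RR (pre H K w) E v u" unfolding Wset_def by auto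
    have "pre H K w \<subseteq> H" unfolding pre_def by auto
    then have "RR H E v u" using RR_mono u(3) by metis
    then have uc: "u \<in> comp H E v" using u(1) unfolding comp_def by simp
    have "key K (kmin K (comp H E v)) \<le> key K u"
      using kmin(2)[OF finsub[OF comp_sub] _ uc] uc by auto
    then show False using u(2) vm by simp
  qed
qed

definition Ess where "Ess = {v\<in>H. W v = {}}"

lemma ess_mset: "(\<Sum>C\<in>components H E. {#(Min (G ` C), PInfty)#}) = image_mset (Pt H E K G) (mset_set Ess)"
proof -
  have cH: "C \<subseteq> H" "C \<noteq> {}" if "C \<in> components H E" for C
    using components_sub[OF that] components_ne[OF that] by auto
  have km: "kmin K C \<in> C" if "C \<in> components H E" for C
    using kmin(1)[OF finsub[OF cH(1)[OF that]] cH(2)[OF that]] .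
  have Ess_eq: "Ess = kmin K ` components H E"
  proof (intro equalityI subsetI)
    fix v assume "v \<in> Ess"
    then have v: "v \<in> H" "v = kmin K (comp H E v)" using ess_char unfolding Ess_def by auto
    then show "v \<in> kmin K ` components H E" using comp_in_components[OF v(1)] by (metis imageI)
  next
    fix v assume "v \<in> kmin K ` components H E"
    then obtain C where C: "C \<in> components H E" "v = kmin K C" by auto
    have vC: "v \<in> C" using km C by simp
    have "C = comp H E v" using components_mem[OF symE C(1) vC] .
    then have "v = kmin K (comp H E v)" using C(2) by simp
    moreover have "v \<in> H" using vC cH C by auto
    ultimately show "v \<in> Ess" using ess_char unfolding Ess_def by auto
  qed
  have inj: "inj_on (kmin K) (components H E)"
  proof (rule inj_onI)
    fix C1 C2 assume a: "C1 \<in> components H E" "C2 \<in> components H E" "kmin K C1 = kmin K C2"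
    have k1: "kmin K C1 \<in> C1" using km a(1) .
    have k2: "kmin K C1 \<in> C2" using km a(2,3) by metis
    show "C1 = C2" using components_disj[OF symE a(1,2) k1 k2] .
  qed
  have "(\<Sum>C\<in>components H E. {#(Min (G ` C), PInfty)#}) = image_mset (\<lambda>C. (Min (G ` C), PInfty)) (mset_set (components H E))"
    using img_sum by metis
  also have "\<dots> = image_mset (Pt H E K G \<circ> kmin K) (mset_set (components H E))"
  proof (rule image_mset_cong)
    fix C assume "C \<in># mset_set (components H E)"
    then have C: "C \<in> components H E" using finite_components[OF finH] by simp
    have "kmin K C \<in> Ess" using Ess_eq C by auto
    then have "W (kmin K C) = {}" unfolding Ess_def by simp
    then show "(Min (G ` C), PInfty) = (Pt H E K G \<circ> kmin K) C"
      unfolding Pt_def death_def using kmin_Min[OF cH[OF C]] by simp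
  qed
  also have "\<dots> = image_mset (Pt H E K G) (mset_set Ess)"
    unfolding Ess_eq image_mset_mset_set[OF inj, symmetric] by (simp add: multiset.map_comp)
  finally show ?thesis .
qed

lemma fin_mset: "(\<Sum>t\<in>G ` H. \<Sum>C\<in>components (sub t) E. image_mset (Pt H E K G) (mset_set (piece t C)))
   = image_mset (Pt H E K G) (mset_set Fin)"
proof -
  define pt where "pt t = (\<Union>C\<in>components (sub t) E. piece t C)" for t
  have fpc: "finite (piece t C)" for t C unfolding piece_def Fin_def using finH by simp
  have inner: "(\<Sum>C\<in>components (sub t) E. image_mset (Pt H E K G) (mset_set (piece t C)))
      = (\<Sum>v\<in>pt t. {#Pt H E K G v#})" for t
  proof -
    have "(\<Sum>v\<in>pt t. {#Pt H E K G v#}) = (\<Sum>C\<in>components (sub t) E. \<Sum>v\<in>piece t C. {#Pt H E K G v#})"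
      unfolding pt_def
    proof (rule sum.UNION_disjoint)
      show "finite (components (sub t) E)" using finite_components finsub[OF sub_H(1)] by metis
      show "\<forall>C\<in>components (sub t) E. finite (piece t C)" using fpc by simp
      show "\<forall>C\<in>components (sub t) E. \<forall>C'\<in>components (sub t) E. C \<noteq> C' \<longrightarrow> piece t C \<inter> piece t C' = {}"
      proof (intro ballI impI)
        fix C C' assume a: "C \<in> components (sub t) E" "C' \<in> components (sub t) E" "C \<noteq> C'"
        show "piece t C \<inter> piece t C' = {}"
        proof (rule ccontr)
          assume "piece t C \<inter> piece t C' \<noteq> {}"
          then obtain v where "v \<in> C" "v \<in> C'" unfolding piece_def by auto
          then show False using components_disj[OF symE a(1,2)] a(3) by simp
        qed
      qed
    qed
    then show ?thesis unfolding img_sum by simp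
  qed
  have fpt: "finite (pt t)" for t unfolding pt_def
    using finite_components[OF finsub[OF sub_H(1)], of t E] fpc by blast
  have U1: "(\<Sum>v\<in>(\<Union>t\<in>G ` H. pt t). {#Pt H E K G v#}) = (\<Sum>t\<in>G ` H. \<Sum>v\<in>pt t. {#Pt H E K G v#})"
  proof (rule sum.UNION_disjoint)
    show "finite (G ` H)" using finH by simp
    show "\<forall>t\<in>G ` H. finite (pt t)" using fpt by simp
    show "\<forall>t\<in>G ` H. \<forall>t'\<in>G ` H. t \<noteq> t' \<longrightarrow> pt t \<inter> pt t' = {}"
      unfolding pt_def piece_def by auto
  qed
  have U2: "(\<Union>t\<in>G ` H. pt t) = Fin"
  proof (intro equalityI subsetI)
    fix v assume "v \<in> (\<Union>t\<in>G ` H. pt t)" then show "v \<in> Fin" unfolding pt_def piece_def by auto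
  next
    fix v assume vF: "v \<in> Fin"
    then have vH: "v \<in> H" and Wne: "W v \<noteq> {}" unfolding Fin_def by auto
    define t where "t = d v"
    obtain w where w: "w \<in> W v" "G w = d v" using d_in[OF Wne] by auto
    have "w \<in> H" using w(1) W_sub by auto
    then have tG: "t \<in> G ` H" using w(2) unfolding t_def by (metis imageI)
    have "v \<in> sub t" using d_ge[OF Wne] vH unfolding t_def sublevel_def by simp
    then have Cc: "comp (sub t) E v \<in> components (sub t) E" "v \<in> comp (sub t) E v"
      using comp_in_components comp_self by metis+
    have "v \<in> piece t (comp (sub t) E v)" unfolding piece_def using vF Cc(2) t_def by simp
    then show "v \<in> (\<Union>t\<in>G ` H. pt t)" using tG Cc(1) unfolding pt_def by blast
  qed
  have "(\<Sum>t\<in>G ` H. \<Sum>C\<in>components (sub t) E. image_mset (Pt H E K G) (mset_set (piece t C)))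
     = (\<Sum>t\<in>G ` H. \<Sum>v\<in>pt t. {#Pt H E K G v#})" by (rule sum.cong[OF refl]) (rule inner)
  also have "\<dots> = (\<Sum>v\<in>(\<Union>t\<in>G ` H. pt t). {#Pt H E K G v#})" by (rule U1[symmetric])
  also have "\<dots> = (\<Sum>v\<in>Fin. {#Pt H E K G v#})" by (simp only: U2)
  also have "\<dots> = image_mset (Pt H E K G) (mset_set Fin)" by (rule img_sum[symmetric])
  finally show ?thesis .
qed

lemma lemmaA: "pd0 H E G = offd H (Pt H E K G)"
proof -
  have set_eq: "{v \<in> H. snd (Pt H E K G v) \<noteq> ereal (fst (Pt H E K G v))} = Ess \<union> Fin"
    unfolding Pt_def death_def Ess_def Fin_def by auto
  have disj: "Ess \<inter> Fin = {}" unfolding Ess_def Fin_def by auto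
  have fE: "finite Ess" "finite Fin" unfolding Ess_def Fin_def using finH by auto
  have "offd H (Pt H E K G) = image_mset (Pt H E K G) (mset_set Ess) + image_mset (Pt H E K G) (mset_set Fin)"
    unfolding offd_def set_eq mset_set_Union[OF fE disj] by simp
  also have "\<dots> = pd0 H E G"
  proof -
    have "(\<Sum>t\<in>G ` H. \<Sum>C\<in>components (sub t) E. image_mset (\<lambda>b. (b, ereal t)) (merged_births H E G t C - {#Min (set_mset (merged_births H E G t C))#}))
      = (\<Sum>t\<in>G ` H. \<Sum>C\<in>components (sub t) E. image_mset (Pt H E K G) (mset_set (piece t C)))"
      by (intro sum.cong refl piece_mset)
    then show ?thesis unfolding pd0_def ess_mset[symmetric] fin_mset[symmetric] by simp
  qed
  finally show ?thesis by simp
qed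
end


section \<open>Closeness of indexed diagrams\<close>

lemma pt_dist_refl: "pt_dist x x = 0"
  unfolding pt_dist_def edist_def by simp

lemma edist_sym: "edist x y = edist y x"
  unfolding edist_def by (cases x; cases y) auto

lemma pt_dist_sym: "pt_dist x y = pt_dist y x"
  unfolding pt_dist_def using edist_sym by (simp add: abs_minus_commute)

lemma pt_dist_nonneg: "0 \<le> pt_dist x y"
  unfolding pt_dist_def by (simp add: le_max_iff_disj)

lemma edist_tri: "edist x z \<le> edist x y + edist y z"
  unfolding edist_def by (cases x; cases y; cases z) auto

lemma pt_dist_tri: "pt_dist x z \<le> pt_dist x y + pt_dist y z"
proof -
  have 1: "ereal \<bar>fst x - fst z\<bar> \<le> pt_dist x y + pt_dist y z"
  proof -
    have "ereal \<bar>fst x - fst z\<bar> \<le> ereal \<bar>fst x - fst y\<bar> + ereal \<bar>fst y - fst z\<bar>" by simp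
    also have "\<dots> \<le> pt_dist x y + pt_dist y z" unfolding pt_dist_def by (intro add_mono) auto
    finally show ?thesis .
  qed
  have 2: "edist (snd x) (snd z) \<le> pt_dist x y + pt_dist y z"
  proof -
    have "edist (snd x) (snd z) \<le> edist (snd x) (snd y) + edist (snd y) (snd z)" by (rule edist_tri)
    also have "\<dots> \<le> pt_dist x y + pt_dist y z" unfolding pt_dist_def by (intro add_mono) auto
    finally show ?thesis .
  qed
  show ?thesis using 1 2 unfolding pt_dist_def by simp
qed

lemma diag_lip: "diag_dist y \<le> diag_dist x + pt_dist x y"
  unfolding diag_dist_def pt_dist_def edist_def
  by (cases "snd x"; cases "snd y") (auto simp: field_simps abs_real_def ereal_max[symmetric] max_def simp del: ereal_max split: if_splits)

lemma diag_zero: "snd x = ereal (fst x) \<Longrightarrow> diag_dist x = 0"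
  unfolding diag_dist_def by simp

definition closeI :: "nat set \<Rightarrow> real \<Rightarrow> (nat \<Rightarrow> real \<times> ereal) \<Rightarrow> (nat \<Rightarrow> real \<times> ereal) \<Rightarrow> bool" where
  "closeI H c P Q \<longleftrightarrow> (\<exists>\<tau>. bij_betw \<tau> H H \<and> (\<forall>v\<in>H. pt_dist (P v) (Q (\<tau> v)) \<le> ereal c
      \<or> (diag_dist (P v) \<le> ereal c \<and> diag_dist (Q (\<tau> v)) \<le> ereal c)))"

lemma closeI_refl: "closeI H 0 P P"
  unfolding closeI_def by (rule exI[of _ id]) (simp add: pt_dist_refl)

lemma closeI_trans: assumes "closeI H a P Q" "closeI H b Q R" "0 \<le> a" "0 \<le> b"
  shows "closeI H (a + b) P R"
proof -
  obtain t1 where t1: "bij_betw t1 H H" "\<forall>v\<in>H. pt_dist (P v) (Q (t1 v)) \<le> ereal a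
      \<or> (diag_dist (P v) \<le> ereal a \<and> diag_dist (Q (t1 v)) \<le> ereal a)" using assms(1) unfolding closeI_def by blast
  obtain t2 where t2: "bij_betw t2 H H" "\<forall>v\<in>H. pt_dist (Q v) (R (t2 v)) \<le> ereal b
      \<or> (diag_dist (Q v) \<le> ereal b \<and> diag_dist (R (t2 v)) \<le> ereal b)" using assms(2) unfolding closeI_def by blast
  have ab: "ereal a \<le> ereal (a + b)" "ereal b \<le> ereal (a + b)" using assms(3,4) by auto
  have pl: "ereal (a + b) = ereal a + ereal b" by simp
  show ?thesis unfolding closeI_def
  proof (intro exI conjI ballI)
    show "bij_betw (t2 \<circ> t1) H H" using t1(1) t2(1) by (rule bij_betw_trans)
    fix v assume v: "v \<in> H"
    define x where "x = P v"
    define y where "y = Q (t1 v)"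
    define z where "z = R (t2 (t1 v))"
    have t1v: "t1 v \<in> H" using t1(1) v bij_betwE by blast
    have A: "pt_dist x y \<le> ereal a \<or> (diag_dist x \<le> ereal a \<and> diag_dist y \<le> ereal a)"
      using t1(2) v unfolding x_def y_def by blast
    have B: "pt_dist y z \<le> ereal b \<or> (diag_dist y \<le> ereal b \<and> diag_dist z \<le> ereal b)"
      using t2(2) t1v unfolding z_def y_def by blast
    have "pt_dist x z \<le> ereal (a + b) \<or> (diag_dist x \<le> ereal (a + b) \<and> diag_dist z \<le> ereal (a + b))"
    proof (cases "pt_dist x y \<le> ereal a")
      case xy: True
      show ?thesis
      proof (cases "pt_dist y z \<le> ereal b")
        case True
        have "pt_dist x z \<le> pt_dist x y + pt_dist y z" by (rule pt_dist_tri)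
        also have "\<dots> \<le> ereal a + ereal b" using xy True by (rule add_mono)
        finally show ?thesis by simp
      next
        case False
        then have yz: "diag_dist y \<le> ereal b" "diag_dist z \<le> ereal b" using B by auto
        have "diag_dist x \<le> diag_dist y + pt_dist y x" by (rule diag_lip)
        also have "\<dots> \<le> ereal b + ereal a" using yz(1) xy pt_dist_sym[of x y] by (intro add_mono) auto
        finally have "diag_dist x \<le> ereal (a + b)" by (simp add: add.commute)
        then show ?thesis using yz(2) ab(2) order_trans by blast
      qed
    next
      case False
      then have xy: "diag_dist x \<le> ereal a" "diag_dist y \<le> ereal a" using A by auto
      show ?thesis
      proof (cases "pt_dist y z \<le> ereal b")
        case True
        have "diag_dist z \<le> diag_dist y + pt_dist y z" by (rule diag_lip)
        also have "\<dots> \<le> ereal a + ereal b" using xy(2) True by (rule add_mono)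
        finally have "diag_dist z \<le> ereal (a + b)" by simp
        then show ?thesis using xy(1) ab(1) order_trans by blast
      next
        case False
        then have "diag_dist z \<le> ereal b" using B by auto
        then show ?thesis using xy(1) ab by (meson order_trans)
      qed
    qed
    then show "pt_dist (P v) (R ((t2 \<circ> t1) v)) \<le> ereal (a + b) \<or>
         diag_dist (P v) \<le> ereal (a + b) \<and> diag_dist (R ((t2 \<circ> t1) v)) \<le> ereal (a + b)"
      unfolding x_def z_def by simp
  qed
qed

lemma Min_lip: assumes "finite A" "A \<noteq> {}" "\<forall>x\<in>A. \<bar>f x - g x\<bar> \<le> (c::real)"
  shows "\<bar>Min (f ` A) - Min (g ` A)\<bar> \<le> c"
proof -
  have "Min (g ` A) \<in> g ` A" using Min_in[of "g ` A"] assms(1,2) by auto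
  then obtain x where x: "x \<in> A" "g x = Min (g ` A)" by auto
  have "Min (f ` A) \<in> f ` A" using Min_in[of "f ` A"] assms(1,2) by auto
  then obtain y where y: "y \<in> A" "f y = Min (f ` A)" by auto
  have "Min (f ` A) \<le> f x" using x(1) assms(1) by simp
  moreover have "Min (g ` A) \<le> g y" using y(1) assms(1) by simp
  ultimately show ?thesis using assms(3) x y by (smt (verit, best))
qed

lemma closeI_lip: assumes "finite H" "\<forall>v\<in>H. \<bar>G v - G' v\<bar> \<le> c"
  shows "closeI H c (Pt H E K G) (Pt H E K G')"
  unfolding closeI_def
proof (intro exI[of _ id] conjI ballI disjI1)
  show "bij_betw id H H" by simp
  fix v assume v: "v \<in> H"
  have W: "finite (Wset H E K v)" using assms(1) unfolding Wset_def by simp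
  have c: "0 \<le> c" using assms(2) v by force
  have "edist (death H E K G v) (death H E K G' v) \<le> ereal c"
  proof (cases "Wset H E K v = {}")
    case True then show ?thesis unfolding death_def edist_def using c by simp
  next
    case False
    have "\<bar>Min (G ` Wset H E K v) - Min (G' ` Wset H E K v)\<bar> \<le> c"
      using Min_lip[OF W False] assms(2) unfolding Wset_def by auto
    then show ?thesis using False c unfolding death_def edist_def by simp
  qed
  then show "pt_dist (Pt H E K G v) (Pt H E K G' (id v)) \<le> ereal c"
    unfolding pt_dist_def Pt_def using assms(2) v by simp
qed

lemma mset_bij: assumes "finite A" "finite B" "image_mset f (mset_set A) = image_mset g (mset_set B)"
  shows "\<exists>\<tau>. bij_betw \<tau> A B \<and> (\<forall>a\<in>A. g (\<tau> a) = f a)"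
  using assms
proof (induction A arbitrary: B rule: finite_induct)
  case empty
  then have "mset_set B = {#}" by simp
  then have "B = {}" using empty.prems(1) mset_set_empty_iff by metis
  then show ?case by (intro exI[of _ "\<lambda>x. undefined"]) (simp add: bij_betw_def)
next
  case (insert a A)
  have "f a \<in># image_mset f (mset_set (insert a A))" using insert.hyps by simp
  then have "f a \<in># image_mset g (mset_set B)" using insert.prems(2) by simp
  then obtain b where b: "b \<in> B" "g b = f a" using insert.prems(1) by auto
  have "mset_set B = add_mset b (mset_set (B - {b}))" using mset_set.remove[OF insert.prems(1) b(1)] .
  then have "add_mset (f a) (image_mset f (mset_set A)) = add_mset (f a) (image_mset g (mset_set (B - {b})))"
    using insert.prems(2) insert.hyps b(2) by simp
  then have "image_mset f (mset_set A) = image_mset g (mset_set (B - {b}))" by simp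
  then obtain t where t: "bij_betw t A (B - {b})" "\<forall>a\<in>A. g (t a) = f a"
    using insert.IH[of "B - {b}"] insert.prems(1) by auto
  have "bij_betw (\<lambda>x. if x \<in> {a} then b else t x) ({a} \<union> A) ({b} \<union> (B - {b}))"
    by (rule bij_betw_disjoint_Un) (use t insert.hyps in \<open>auto simp: bij_betw_def\<close>)
  moreover have "{b} \<union> (B - {b}) = B" using b by auto
  ultimately show ?case using t(2) b(2) insert.hyps
    by (intro exI[of _ "\<lambda>x. if x \<in> {a} then b else t x"]) auto
qed

definition odset :: "nat set \<Rightarrow> (nat \<Rightarrow> real \<times> ereal) \<Rightarrow> nat set" where
  "odset H P = {v \<in> H. snd (P v) \<noteq> ereal (fst (P v))}"

lemma closeI_offd: assumes "finite H" "offd H P = offd H Q" shows "closeI H 0 P Q"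
proof -
  define A where "A = odset H P"
  define B where "B = odset H Q"
  have fAB: "finite A" "finite B" "A \<subseteq> H" "B \<subseteq> H" using assms(1) unfolding A_def B_def odset_def by auto
  have "image_mset P (mset_set A) = image_mset Q (mset_set B)"
    using assms(2) unfolding offd_def A_def B_def odset_def .
  then obtain t1 where t1: "bij_betw t1 A B" "\<forall>a\<in>A. Q (t1 a) = P a"
    using mset_bij[OF fAB(1,2)] by blast
  have "card A = card B" using t1(1) by (rule bij_betw_same_card)
  then have "card (H - A) = card (H - B)" using fAB assms(1) by (simp add: card_Diff_subset)
  then obtain t2 where t2: "bij_betw t2 (H - A) (H - B)" using finite_same_card_bij assms(1) by blast
  have bij: "bij_betw (\<lambda>x. if x \<in> A then t1 x else t2 x) (A \<union> (H - A)) (B \<union> (H - B))"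
    by (rule bij_betw_disjoint_Un[OF t1(1) t2]) auto
  have HA: "A \<union> (H - A) = H" "B \<union> (H - B) = H" using fAB by auto
  show ?thesis unfolding closeI_def
  proof (intro exI conjI ballI)
    show "bij_betw (\<lambda>x. if x \<in> A then t1 x else t2 x) H H" using bij HA by simp
    fix v assume v: "v \<in> H"
    show "pt_dist (P v) (Q (if v \<in> A then t1 v else t2 v)) \<le> ereal 0 \<or>
          diag_dist (P v) \<le> ereal 0 \<and> diag_dist (Q (if v \<in> A then t1 v else t2 v)) \<le> ereal 0"
    proof (cases "v \<in> A")
      case True then show ?thesis using t1(2) pt_dist_refl by simp
    next
      case False
      have "t2 v \<in> H - B" using t2 v False bij_betwE by blast
      then have "diag_dist (Q (t2 v)) = 0" using diag_zero unfolding B_def odset_def by auto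
      moreover have "diag_dist (P v) = 0" using diag_zero False v unfolding A_def odset_def by auto
      ultimately show ?thesis using False by simp
    qed
  qed
qed

lemma mset_diff_img: assumes "finite A" "X \<subseteq> A"
  shows "image_mset f (mset_set A) - image_mset f (mset_set X) = image_mset f (mset_set (A - X))"
proof -
  have fX: "finite X" "finite (A - X)" using assms finite_subset by auto
  have "A = X \<union> (A - X)" using assms(2) by auto
  then have "mset_set A = mset_set X + mset_set (A - X)"
    using mset_set_Union[OF fX] by (metis Diff_disjoint)
  then show ?thesis by simp
qed

lemma closeI_bn: assumes fH: "finite H" and cl: "closeI H c P Q" and c0: "0 \<le> c"
  shows "bottleneck (offd H P) (offd H Q) \<le> ereal c"
proof -
  obtain t where t: "bij_betw t H H" "\<forall>v\<in>H. pt_dist (P v) (Q (t v)) \<le> ereal c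
      \<or> (diag_dist (P v) \<le> ereal c \<and> diag_dist (Q (t v)) \<le> ereal c)" using cl unfolding closeI_def by blast
  define A where "A = odset H P"
  define B where "B = odset H Q"
  have fAB: "finite A" "finite B" "A \<subseteq> H" "B \<subseteq> H" using fH unfolding A_def B_def odset_def by auto
  have D1: "offd H P = image_mset P (mset_set A)" unfolding offd_def A_def odset_def ..
  have D2: "offd H Q = image_mset Q (mset_set B)" unfolding offd_def B_def odset_def ..
  define Bm where "Bm = {v\<in>A. t v \<in> B \<and> pt_dist (P v) (Q (t v)) \<le> ereal c}"
  have BmA: "Bm \<subseteq> A" unfolding Bm_def by auto
  have fBm: "finite Bm" using BmA fAB finite_subset by metis
  have tBm: "t ` Bm \<subseteq> B" unfolding Bm_def by auto
  have injBm: "inj_on t Bm" using t(1) BmA fAB(3) unfolding bij_betw_def by (meson inj_on_subset order_trans)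
  define M where "M = image_mset (\<lambda>v. (P v, Q (t v))) (mset_set Bm)"
  have fstM: "image_mset fst M = image_mset P (mset_set Bm)" unfolding M_def by (simp add: multiset.map_comp o_def)
  have "image_mset snd M = image_mset (Q \<circ> t) (mset_set Bm)" unfolding M_def by (simp add: multiset.map_comp o_def)
  also have "\<dots> = image_mset Q (mset_set (t ` Bm))" using image_mset_mset_set[OF injBm] by (simp add: multiset.map_comp[symmetric])
  finally have sndM: "image_mset snd M = image_mset Q (mset_set (t ` Bm))" .
  have pm: "partial_matching (offd H P) (offd H Q) M"
    unfolding partial_matching_def D1 D2 fstM sndM
    using subset_imp_msubset_mset_set[OF BmA fAB(1)] subset_imp_msubset_mset_set[OF tBm fAB(2)]
    by (auto intro: image_mset_subseteq_mono)
  have R1: "offd H P - image_mset fst M = image_mset P (mset_set (A - Bm))"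
    unfolding D1 fstM by (rule mset_diff_img[OF fAB(1) BmA])
  have R2: "offd H Q - image_mset snd M = image_mset Q (mset_set (B - t ` Bm))"
    unfolding D2 sndM by (rule mset_diff_img[OF fAB(2) tBm])
  have cost: "matching_cost (offd H P) (offd H Q) M \<le> ereal c"
    unfolding matching_cost_def R1 R2
  proof (rule Sup_least)
    fix x assume "x \<in> {0} \<union> (\<lambda>xy. pt_dist (fst xy) (snd xy)) ` set_mset M \<union>
         diag_dist ` set_mset (image_mset P (mset_set (A - Bm))) \<union>
         diag_dist ` set_mset (image_mset Q (mset_set (B - t ` Bm)))"
    then consider "x = 0" | (a) "x \<in> (\<lambda>xy. pt_dist (fst xy) (snd xy)) ` set_mset M"
      | (b) "x \<in> diag_dist ` P ` (A - Bm)" | (d) "x \<in> diag_dist ` Q ` (B - t ` Bm)"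
    proof -
      have "set_mset (image_mset P (mset_set (A - Bm))) = P ` (A - Bm)"
        "set_mset (image_mset Q (mset_set (B - t ` Bm))) = Q ` (B - t ` Bm)" using fAB by auto
      note eqs = this
      have "((x = 0 \<or> x \<in> (\<lambda>xy. pt_dist (fst xy) (snd xy)) ` set_mset M) \<or>
       x \<in> diag_dist ` P ` (A - Bm)) \<or> x \<in> diag_dist ` Q ` (B - t ` Bm)"
        using \<open>x \<in> _\<close> unfolding eqs Un_iff singleton_iff .
      then show "(x = 0 \<Longrightarrow> thesis) \<Longrightarrow> (x \<in> (\<lambda>xy. pt_dist (fst xy) (snd xy)) ` set_mset M \<Longrightarrow> thesis) \<Longrightarrow>
       (x \<in> diag_dist ` P ` (A - Bm) \<Longrightarrow> thesis) \<Longrightarrow> (x \<in> diag_dist ` Q ` (B - t ` Bm) \<Longrightarrow> thesis) \<Longrightarrow> thesis"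
        by argo
    qed
    then show "x \<le> ereal c"
    proof cases
      case 1 then show ?thesis using c0 by simp
    next
      case a
      then obtain v where "v \<in> Bm" "x = pt_dist (P v) (Q (t v))" unfolding M_def using fBm by auto
      then show ?thesis unfolding Bm_def by auto
    next
      case b
      then obtain v where v: "v \<in> A" "v \<notin> Bm" "x = diag_dist (P v)" by auto
      have vH: "v \<in> H" using v fAB by auto
      have tvH: "t v \<in> H" using t(1) vH bij_betwE by blast
      show ?thesis
      proof (cases "pt_dist (P v) (Q (t v)) \<le> ereal c")
        case True
        then have "t v \<notin> B" using v unfolding Bm_def by auto
        then have "diag_dist (Q (t v)) = 0" using tvH diag_zero unfolding B_def odset_def by auto
        moreover have "diag_dist (P v) \<le> diag_dist (Q (t v)) + pt_dist (Q (t v)) (P v)" by (rule diag_lip)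
        ultimately have "diag_dist (P v) \<le> pt_dist (P v) (Q (t v))" using pt_dist_sym[of "P v" "Q (t v)"] by simp
        then show ?thesis using True v(3) by simp
      next
        case False then show ?thesis using t(2) vH v(3) by auto
      qed
    next
      case d
      then obtain y where y: "y \<in> B" "y \<notin> t ` Bm" "x = diag_dist (Q y)" by auto
      have yH: "y \<in> H" using y fAB by auto
      have "y \<in> t ` H" using t(1) yH unfolding bij_betw_def by simp
      then obtain v where v: "v \<in> H" "t v = y" by blast
      have vBm: "v \<notin> Bm" using v y(2) by auto
      show ?thesis
      proof (cases "pt_dist (P v) (Q (t v)) \<le> ereal c")
        case True
        then have "v \<notin> A" using vBm y(1) v unfolding Bm_def by auto
        then have "diag_dist (P v) = 0" using v(1) diag_zero unfolding A_def odset_def by auto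
        moreover have "diag_dist (Q (t v)) \<le> diag_dist (P v) + pt_dist (P v) (Q (t v))" by (rule diag_lip)
        ultimately have "diag_dist (Q (t v)) \<le> pt_dist (P v) (Q (t v))" by simp
        then show ?thesis using True y(3) v(2) by simp
      next
        case False then show ?thesis using t(2) v y(3) by auto
      qed
    qed
  qed
  have "bottleneck (offd H P) (offd H Q) \<le> matching_cost (offd H P) (offd H Q) M"
    unfolding bottleneck_def using pm by (intro Inf_lower) auto
  then show ?thesis using cost by (rule order_trans)
qed


section \<open>Interpolation chain\<close>

lemma compat_self: "compat H G G"
  unfolding compat_def key_def by (auto simp: less_prod_def)

lemma pd0_Pt: assumes "finite H" "symE E" "compat H K G" shows "pd0 H E G = offd H (Pt H E K G)"
  using LA.lemmaA[OF LA.intro[OF assms]] .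

lemma affine_root1: fixes c s m \<beta> :: real
  assumes "c + s * \<beta> < 0" "0 \<le> c + m * \<beta>" "s < m"
  shows "\<beta> \<noteq> 0" "s < - c / \<beta>" "- c / \<beta> \<le> m" "c + (- c / \<beta>) * \<beta> = 0"
proof -
  have b: "\<beta> > 0"
  proof (rule ccontr)
    assume "\<not> \<beta> > 0"
    then have "m * \<beta> \<le> s * \<beta>" using assms(3) by (simp add: mult_right_mono_neg)
    then show False using assms(1,2) by simp
  qed
  then show "\<beta> \<noteq> 0" by simp
  have "s * \<beta> < - c" using assms(1) by simp
  then show "s < - c / \<beta>" using b by (subst pos_less_divide_eq) auto
  have "- c \<le> m * \<beta>" using assms(2) by simp
  then show "- c / \<beta> \<le> m" using b by (subst pos_divide_le_eq) auto
  show "c + (- c / \<beta>) * \<beta> = 0" using b by simp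
qed

lemma affine_root2: fixes c s m \<beta> :: real
  assumes "c + s * \<beta> < 0" "0 \<le> c + m * \<beta>" "m < s"
  shows "\<beta> \<noteq> 0" "- c / \<beta> < s" "m \<le> - c / \<beta>" "c + (- c / \<beta>) * \<beta> = 0"
proof -
  have b: "\<beta> < 0"
  proof (rule ccontr)
    assume "\<not> \<beta> < 0"
    then have "m * \<beta> \<le> s * \<beta>" using assms(3) by (simp add: mult_right_mono)
    then show False using assms(1,2) by simp
  qed
  then show "\<beta> \<noteq> 0" by simp
  have "s * \<beta> < - c" using assms(1) by simp
  then show "- c / \<beta> < s" using b by (subst neg_divide_less_eq) auto
  have "- c \<le> m * \<beta>" using assms(2) by simp
  then show "m \<le> - c / \<beta>" using b by (subst neg_le_divide_eq) auto
  show "c + (- c / \<beta>) * \<beta> = 0" using b by simp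
qed

locale CH =
  fixes H :: "nat set" and E :: "nat \<Rightarrow> nat \<Rightarrow> bool" and F0 F1 :: "nat \<Rightarrow> real" and \<Delta> :: real
  assumes finH: "finite H" and symE: "symE E" and Dl: "\<forall>v\<in>H. \<bar>F1 v - F0 v\<bar> \<le> \<Delta>" and D0: "0 \<le> \<Delta>"
begin

definition Fs :: "real \<Rightarrow> nat \<Rightarrow> real" where "Fs r v = F0 v + r * (F1 v - F0 v)"

definition bet :: "nat \<Rightarrow> nat \<Rightarrow> real" where "bet u v = (F1 v - F0 v) - (F1 u - F0 u)"

definition BP :: "real set" where
  "BP = {0, 1} \<union> {r. 0 \<le> r \<and> r \<le> 1 \<and> (\<exists>u\<in>H. \<exists>v\<in>H. bet u v \<noteq> 0 \<and> Fs r u = Fs r v)}"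

lemma Fs_diff: "Fs r v - Fs r u = (F0 v - F0 u) + r * bet u v"
  unfolding Fs_def bet_def by (simp add: algebra_simps)

lemma finBP: "finite BP"
proof -
  have "{r. 0 \<le> r \<and> r \<le> 1 \<and> (\<exists>u\<in>H. \<exists>v\<in>H. bet u v \<noteq> 0 \<and> Fs r u = Fs r v)}
     \<subseteq> (\<lambda>(u, v). - (F0 v - F0 u) / bet u v) ` (H \<times> H)"
  proof
    fix r assume "r \<in> {r. 0 \<le> r \<and> r \<le> 1 \<and> (\<exists>u\<in>H. \<exists>v\<in>H. bet u v \<noteq> 0 \<and> Fs r u = Fs r v)}"
    then obtain u v where uv: "u \<in> H" "v \<in> H" "bet u v \<noteq> 0" "Fs r u = Fs r v" by auto
    have "(F0 v - F0 u) + r * bet u v = 0" using Fs_diff[of r v u] uv(4) by simp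
    then have "r = - (F0 v - F0 u) / bet u v" using uv(3) by (simp add: eq_divide_eq algebra_simps)
    then show "r \<in> (\<lambda>(u, v). - (F0 v - F0 u) / bet u v) ` (H \<times> H)" using uv(1,2) by force
  qed
  moreover have "finite ((\<lambda>(u, v). - (F0 v - F0 u) / bet u v) ` (H \<times> H))" using finH by simp
  ultimately have "finite {r. 0 \<le> r \<and> r \<le> 1 \<and> (\<exists>u\<in>H. \<exists>v\<in>H. bet u v \<noteq> 0 \<and> Fs r u = Fs r v)}"
    by (rule finite_subset)
  then show ?thesis unfolding BP_def by simp
qed

lemma BP01: "r \<in> BP \<Longrightarrow> 0 \<le> r \<and> r \<le> 1" unfolding BP_def by auto

abbreviation "D G \<equiv> Pt H E G G"

lemma compat_mid: assumes s: "s \<in> BP" and s': "s' \<in> BP" and lt: "s < s'" and gap: "\<forall>b\<in>BP. \<not> (s < b \<and> b < s')"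
  shows "compat H (Fs ((s + s') / 2)) (Fs s)" "compat H (Fs ((s + s') / 2)) (Fs s')"
proof -
  define m where "m = (s + s') / 2"
  have sm: "s < m" "m < s'" using lt unfolding m_def by auto
  have r01: "0 \<le> s" "s' \<le> 1" using BP01 s s' by auto
  have base: "Fs m u \<le> Fs m v" if "u \<in> H" "v \<in> H" "key (Fs m) u < key (Fs m) v" for u v
    using that(3) unfolding key_def by (auto simp: less_prod_def)
  have gm: "0 \<le> (F0 v - F0 u) + m * bet u v" if "u \<in> H" "v \<in> H" "key (Fs m) u < key (Fs m) v" for u v
    using base[OF that] Fs_diff[of m v u] by simp
  show "compat H (Fs ((s + s') / 2)) (Fs s)" unfolding compat_def m_def[symmetric]
  proof (intro ballI impI)
    fix u v assume uv: "u \<in> H" "v \<in> H" "key (Fs m) u < key (Fs m) v"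
    show "Fs s u \<le> Fs s v"
    proof (rule ccontr)
      assume "\<not> Fs s u \<le> Fs s v"
      then have neg: "(F0 v - F0 u) + s * bet u v < 0" using Fs_diff[of s v u] by simp
      note R = affine_root1[OF neg gm[OF uv] sm(1)]
      define r where "r = - (F0 v - F0 u) / bet u v"
      have "Fs r u = Fs r v" using R(4) Fs_diff[of r v u] unfolding r_def by simp
      moreover have "0 \<le> r" "r \<le> 1" using R(2,3) r01 sm unfolding r_def by auto
      ultimately have "r \<in> BP" using uv R(1) unfolding BP_def by blast
      then show False using gap R(2,3) sm unfolding r_def by force
    qed
  qed
  show "compat H (Fs ((s + s') / 2)) (Fs s')" unfolding compat_def m_def[symmetric]
  proof (intro ballI impI)
    fix u v assume uv: "u \<in> H" "v \<in> H" "key (Fs m) u < key (Fs m) v"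
    show "Fs s' u \<le> Fs s' v"
    proof (rule ccontr)
      assume "\<not> Fs s' u \<le> Fs s' v"
      then have neg: "(F0 v - F0 u) + s' * bet u v < 0" using Fs_diff[of s' v u] by simp
      note R = affine_root2[OF neg gm[OF uv] sm(2)]
      define r where "r = - (F0 v - F0 u) / bet u v"
      have "Fs r u = Fs r v" using R(4) Fs_diff[of r v u] unfolding r_def by simp
      moreover have "0 \<le> r" "r \<le> 1" using R(2,3) r01 sm unfolding r_def by auto
      ultimately have "r \<in> BP" using uv R(1) unfolding BP_def by blast
      then show False using gap R(2,3) sm unfolding r_def by force
    qed
  qed
qed

lemma step: assumes s: "s \<in> BP" and s': "s' \<in> BP" and lt: "s < s'" and gap: "\<forall>b\<in>BP. \<not> (s < b \<and> b < s')"
  shows "closeI H ((s' - s) * \<Delta>) (D (Fs s)) (D (Fs s'))"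
proof -
  define K where "K = Fs ((s + s') / 2)"
  note cm = compat_mid[OF assms, folded K_def]
  have c1: "closeI H 0 (D (Fs s)) (Pt H E K (Fs s))"
    using closeI_offd[OF finH] pd0_Pt[OF finH symE compat_self] pd0_Pt[OF finH symE cm(1)] by metis
  have c3: "closeI H 0 (Pt H E K (Fs s')) (D (Fs s'))"
    using closeI_offd[OF finH] pd0_Pt[OF finH symE compat_self] pd0_Pt[OF finH symE cm(2)] by metis
  have "\<forall>v\<in>H. \<bar>Fs s v - Fs s' v\<bar> \<le> (s' - s) * \<Delta>"
  proof
    fix v assume v: "v \<in> H"
    have e: "Fs s v - Fs s' v = (s - s') * (F1 v - F0 v)" unfolding Fs_def by (simp add: algebra_simps)
    have "\<bar>Fs s v - Fs s' v\<bar> = \<bar>s - s'\<bar> * \<bar>F1 v - F0 v\<bar>" unfolding e abs_mult ..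
    also have "\<bar>s - s'\<bar> = s' - s" using lt by simp
    finally have "\<bar>Fs s v - Fs s' v\<bar> = (s' - s) * \<bar>F1 v - F0 v\<bar>" .
    also have "\<dots> \<le> (s' - s) * \<Delta>" using Dl v lt by (intro mult_left_mono) auto
    finally show "\<bar>Fs s v - Fs s' v\<bar> \<le> (s' - s) * \<Delta>" .
  qed
  then have c2: "closeI H ((s' - s) * \<Delta>) (Pt H E K (Fs s)) (Pt H E K (Fs s'))"
    using closeI_lip[OF finH] by blast
  have nn: "0 \<le> (s' - s) * \<Delta>" using lt D0 by simp
  have "closeI H (0 + (s' - s) * \<Delta>) (D (Fs s)) (Pt H E K (Fs s'))"
    using closeI_trans[OF c1 c2 order.refl nn] .
  then have "closeI H ((s' - s) * \<Delta> + 0) (D (Fs s)) (D (Fs s'))"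
    using closeI_trans[OF _ c3 nn order.refl] by simp
  then show ?thesis by simp
qed


lemma Fs0: "Fs 0 = F0" unfolding Fs_def by (simp add: fun_eq_iff)
lemma Fs1: "Fs 1 = F1" unfolding Fs_def by (simp add: fun_eq_iff)

lemma chain: "\<forall>s\<in>BP. card {b\<in>BP. b < s} = n \<longrightarrow> closeI H (s * \<Delta>) (D F0) (D (Fs s))"
proof (induction n)
  case 0
  show ?case
  proof (intro ballI impI)
    fix s assume s: "s \<in> BP" "card {b\<in>BP. b < s} = 0"
    have "finite {b\<in>BP. b < s}" using finBP by simp
    then have e: "{b\<in>BP. b < s} = {}" using s(2) by simp
    have "0 \<in> BP" unfolding BP_def by simp
    then have "\<not> 0 < s" using e by blast
    then have "s = 0" using BP01[OF s(1)] by simp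
    then show "closeI H (s * \<Delta>) (D F0) (D (Fs s))" using closeI_refl Fs0 by simp
  qed
next
  case (Suc n)
  show ?case
  proof (intro ballI impI)
    fix s assume s: "s \<in> BP" "card {b\<in>BP. b < s} = Suc n"
    define L where "L = {b\<in>BP. b < s}"
    have fL: "finite L" unfolding L_def using finBP by simp
    have Lne: "L \<noteq> {}" using s(2) unfolding L_def by (metis card.empty nat.distinct(1))
    define s0 where "s0 = Max L"
    have s0L: "s0 \<in> L" unfolding s0_def using fL Lne by simp
    have s0B: "s0 \<in> BP" "s0 < s" using s0L unfolding L_def by auto
    have le: "b \<le> s0" if "b \<in> L" for b unfolding s0_def using fL that by simp
    have "{b\<in>BP. b < s0} = L - {s0}"
    proof (intro equalityI subsetI)
      fix b assume "b \<in> {b\<in>BP. b < s0}" then show "b \<in> L - {s0}" using s0B unfolding L_def by auto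
    next
      fix b assume "b \<in> L - {s0}" then show "b \<in> {b\<in>BP. b < s0}" using le unfolding L_def by force
    qed
    then have "card {b\<in>BP. b < s0} = n" using s(2) s0L fL unfolding L_def by simp
    then have c1: "closeI H (s0 * \<Delta>) (D F0) (D (Fs s0))" using Suc.IH s0B(1) by blast
    have gap: "\<forall>b\<in>BP. \<not> (s0 < b \<and> b < s)" using le unfolding L_def by force
    have c2: "closeI H ((s - s0) * \<Delta>) (D (Fs s0)) (D (Fs s))" using step[OF s0B(1) s(1) s0B(2) gap] .
    have nn: "0 \<le> s0 * \<Delta>" "0 \<le> (s - s0) * \<Delta>" using BP01[OF s0B(1)] s0B(2) D0 by auto
    have "closeI H (s0 * \<Delta> + (s - s0) * \<Delta>) (D F0) (D (Fs s))" using closeI_trans[OF c1 c2 nn] .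
    then show "closeI H (s * \<Delta>) (D F0) (D (Fs s))" by (simp add: algebra_simps)
  qed
qed

lemma stability: "bottleneck (pd0 H E F0) (pd0 H E F1) \<le> ereal \<Delta>"
proof -
  have "1 \<in> BP" unfolding BP_def by simp
  then have "closeI H (1 * \<Delta>) (D F0) (D (Fs 1))" using chain by blast
  then have c: "closeI H \<Delta> (D F0) (D F1)" using Fs1 by simp
  show ?thesis
    unfolding pd0_Pt[OF finH symE compat_self[of H F0]] pd0_Pt[OF finH symE compat_self[of H F1]]
    using closeI_bn[OF finH c D0] .
qed

end


lemma dual_sym: "\<forall>u v. E u v \<longrightarrow> E v u \<Longrightarrow> symE (dual_adj E VV)"
  unfolding symE_def dual_adj_def by blast

lemma Wset_cong: assumes "\<forall>u\<in>H. \<forall>v\<in>H. E1 u v = E2 u v" shows "Wset H E1 K v = Wset H E2 K v"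
proof -
  have "induced_rel (pre H K w) E1 = induced_rel (pre H K w) E2" for w
  proof (rule RR_cong[OF _ assms])
    show "pre H K w \<subseteq> H" unfolding pre_def by auto
  qed
  then show ?thesis unfolding Wset_def by simp
qed

lemma pd0_cong: fixes H :: "nat set" assumes "finite H" "symE E1" "symE E2" "\<forall>u\<in>H. \<forall>v\<in>H. E1 u v = E2 u v"
  shows "pd0 H E1 G = pd0 H E2 G"
proof -
  have "Wset H E1 G = Wset H E2 G" using Wset_cong[OF assms(4)] by (simp add: fun_eq_iff)
  note eq = this
  have "Pt H E1 G G = Pt H E2 G G" unfolding Pt_def death_def eq ..
  then show ?thesis using pd0_Pt[OF assms(1,2) compat_self] pd0_Pt[OF assms(1,3) compat_self] by simp
qed

lemma ratio_split1: fixes aX aY bX bY :: real assumes "bX > 0" "bY > 0"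
  shows "aX / bX - (aX + aY) / (bX + bY) = bY / bX * ((aX + aY) / (bX + bY) - aY / bY)"
proof -
  have "bX + bY \<noteq> 0" "bX \<noteq> 0" "bY \<noteq> 0" using assms by auto
  moreover have "bX * bX + bX * bY > 0" "bX * (bX * bY) + bX * (bY * bY) > 0" using assms by (simp_all add: add_pos_pos)
  ultimately show ?thesis by (simp add: field_simps)
qed

lemma ratio_split2: fixes aX aY bX bY :: real assumes "bX > 0" "bY > 0"
  shows "(aX + aY) / (bX + bY) - aX / bX = bY / (bX + bY) * (aY / bY - aX / bX)"
proof -
  have "bX + bY \<noteq> 0" "bX \<noteq> 0" "bY \<noteq> 0" using assms by auto
  moreover have "bX * bX + bX * bY > 0" "bX * (bX * bY) + bX * (bY * bY) > 0" using assms by (simp_all add: add_pos_pos)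
  ultimately show ?thesis by (simp add: field_simps)
qed

lemma factor_bound: fixes bY bZ pY pZ T \<alpha> \<epsilon> :: real
  assumes "0 < bY" "bY \<le> pY" "\<alpha> * pZ \<le> bZ" "(1 - \<epsilon>) * T \<le> pZ" "pY \<le> 2 * \<epsilon> * T"
    "0 < T" "0 < \<alpha>" "0 < \<epsilon>" "\<epsilon> < 1" "0 < bZ"
  shows "bY / bZ \<le> 2 * \<epsilon> / (\<alpha> * (1 - \<epsilon>))"
proof -
  define c where "c = 2 * \<epsilon> / (\<alpha> * (1 - \<epsilon>))"
  have ae: "\<alpha> * (1 - \<epsilon>) > 0" using assms(7,9) by simp
  have cpos: "0 \<le> c" unfolding c_def using ae assms(8) by simp
  have cm: "c * (\<alpha> * (1 - \<epsilon>)) = 2 * \<epsilon>" unfolding c_def using ae by (metis less_irrefl nonzero_eq_divide_eq)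
  have "bY \<le> 2 * \<epsilon> * T" using assms(2,5) by linarith
  also have "\<dots> = c * (\<alpha> * (1 - \<epsilon>)) * T" using cm by simp
  also have "\<dots> = c * \<alpha> * ((1 - \<epsilon>) * T)" by (simp only: mult.assoc)
  also have "\<dots> \<le> c * \<alpha> * pZ" using assms(4) cpos assms(7) by (intro mult_left_mono) auto
  also have "\<dots> = c * (\<alpha> * pZ)" by (simp add: mult.assoc)
  also have "\<dots> \<le> c * bZ" using assms(3) cpos by (rule mult_left_mono)
  finally have "bY \<le> c * bZ" .
  then have "bY / bZ \<le> c" using assms(10) by (simp add: pos_divide_le_eq)
  then show ?thesis unfolding c_def .
qed

lemma sum_pos_set: fixes f :: "'v \<Rightarrow> real" assumes "finite A" "A \<noteq> {}" "\<forall>x\<in>A. f x > 0" shows "sum f A > 0"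
  using assms by (simp add: sum_pos)

lemma one_side: fixes a b p :: "'v \<Rightarrow> real"
  assumes fX: "finite X" and fY: "finite Y" and XY: "X \<inter> Y = {}" and Xne: "X \<noteq> {}" and Yne: "Y \<noteq> {}"
    and ab: "\<forall>v\<in>X \<union> Y. 0 \<le> a v \<and> a v \<le> b v \<and> b v \<le> p v \<and> b v > 0"
  shows "ratio a b X - ratio a b (X \<union> Y) = sum b Y / sum b X * (ratio a b (X \<union> Y) - ratio a b Y)"
    "ratio a b (X \<union> Y) - ratio a b X = sum b Y / sum b (X \<union> Y) * (ratio a b Y - ratio a b X)"
    "sum b X > 0" "sum b Y > 0" "sum b Y \<le> sum p Y"
proof -
  show bX: "sum b X > 0" using sum_pos_set[OF fX Xne] ab by auto
  show bY: "sum b Y > 0" using sum_pos_set[OF fY Yne] ab by auto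
  show "sum b Y \<le> sum p Y" using ab by (intro sum_mono) auto
  have sa: "sum a (X \<union> Y) = sum a X + sum a Y" and sb: "sum b (X \<union> Y) = sum b X + sum b Y"
    using sum.union_disjoint[OF fX fY XY] by auto
  show "ratio a b X - ratio a b (X \<union> Y) = sum b Y / sum b X * (ratio a b (X \<union> Y) - ratio a b Y)"
    unfolding ratio_def sa sb by (rule ratio_split1[OF bX bY])
  show "ratio a b (X \<union> Y) - ratio a b X = sum b Y / sum b (X \<union> Y) * (ratio a b Y - ratio a b X)"
    unfolding ratio_def sa sb by (rule ratio_split2[OF bX bY])
qed

theorem mainTheorem2:
  fixes V :: "'v set" and E :: "'v \<Rightarrow> 'v \<Rightarrow> bool" and p a b :: "'v \<Rightarrow> real"
    and k i j :: nat and \<epsilon> \<alpha> :: real and VV VV' :: "nat \<Rightarrow> 'v set" and Vij :: "'v set"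
  assumes finV: "finite V"
    and E_in: "\<forall>u v. E u v \<longrightarrow> u \<in> V \<and> v \<in> V"
    and E_sym: "\<forall>u v. E u v \<longrightarrow> E v u"
    and p_pos: "\<forall>v\<in>V. p v > 0"
    and k2: "k \<ge> 2"
    and eps: "0 < \<epsilon>" "\<epsilon> < 1"
    and P: "districting_plan V E p k \<epsilon> VV"
    and P': "districting_plan V E p k \<epsilon> VV'"
    and ij: "i < k" "j < k" "i \<noteq> j"
    and Vij: "Vij \<noteq> {}" "Vij \<subseteq> VV i"
    and Vi': "VV' i = VV i - Vij"
    and Vj': "VV' j = VV j \<union> Vij"
    and Vm': "\<forall>m<k. m \<noteq> i \<and> m \<noteq> j \<longrightarrow> VV' m = VV m"
    and iso: "\<forall>m<k. \<forall>l<k. dual_adj E VV m l \<longleftrightarrow> dual_adj E VV' m l"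
    and ab: "\<forall>v\<in>V. 0 \<le> a v \<and> a v \<le> b v \<and> b v \<le> p v \<and> b v > 0"
    and alpha: "\<alpha> > 0"
    and alpha_bd: "\<forall>W\<in>{VV i, VV' i, VV j, VV' j}. sum b W / sum p W \<ge> \<alpha>"
  shows "bottleneck
           (pd0 {..<k} (dual_adj E VV) (\<lambda>m. ratio a b (VV m)))
           (pd0 {..<k} (dual_adj E VV') (\<lambda>m. ratio a b (VV' m)))
         \<le> ereal (2 * \<epsilon> / (\<alpha> * (1 - \<epsilon>)) *
              max \<bar>ratio a b Vij - ratio a b (VV i)\<bar> \<bar>ratio a b Vij - ratio a b (VV j)\<bar>)"
proof -
  define H where "H = {..<k}"
  define F0 where "F0 = (\<lambda>m. ratio a b (VV m))"
  define F1 where "F1 = (\<lambda>m. ratio a b (VV' m))"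
  define c where "c = 2 * \<epsilon> / (\<alpha> * (1 - \<epsilon>))"
  define M where "M = max \<bar>ratio a b Vij - ratio a b (VV i)\<bar> \<bar>ratio a b Vij - ratio a b (VV j)\<bar>"
  define \<Delta> where "\<Delta> = c * M"
  define T where "T = sum p V / real k"
  have finH: "finite H" unfolding H_def by simp
  have sym1: "symE (dual_adj E VV)" and sym2: "symE (dual_adj E VV')" using dual_sym[OF E_sym] by auto
  have cpos: "0 \<le> c" unfolding c_def using eps alpha by simp
  have M0: "0 \<le> M" unfolding M_def by simp
  have D0: "0 \<le> \<Delta>" unfolding \<Delta>_def using cpos M0 by simp
  have PU: "(\<Union>m<k. VV m) = V" and Pdisj: "\<forall>m<k. \<forall>l<k. m \<noteq> l \<longrightarrow> VV m \<inter> VV l = {}"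
    and Pbal: "\<forall>m<k. (1 - \<epsilon>) * T \<le> sum p (VV m) \<and> sum p (VV m) \<le> (1 + \<epsilon>) * T"
    using P unfolding districting_plan_def T_def by auto
  have PU': "(\<Union>m<k. VV' m) = V" and Pconn': "\<forall>m<k. connected_set (VV' m) E"
    and Pbal': "\<forall>m<k. (1 - \<epsilon>) * T \<le> sum p (VV' m) \<and> sum p (VV' m) \<le> (1 + \<epsilon>) * T"
    using P' unfolding districting_plan_def T_def by auto
  have subV: "VV m \<subseteq> V" "VV' m \<subseteq> V" if "m < k" for m using PU PU' that by auto
  have finS: "finite S" if "S \<subseteq> V" for S using finV that finite_subset by metis
  have Vi'ne: "VV' i \<noteq> {}" using Pconn' ij(1) unfolding connected_set_def by auto
  have VijV: "Vij \<subseteq> V" using Vij(2) subV(1)[OF ij(1)] by auto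
  have Vne: "V \<noteq> {}" using VijV Vij(1) by auto
  have Tpos: "T > 0" unfolding T_def using sum_pos_set[OF finV Vne] p_pos k2 by auto
  have dji: "VV j \<inter> Vij = {}" using Pdisj ij Vij(2) by blast
  have pVpos: "sum p S > 0" if "S \<subseteq> V" "S \<noteq> {}" for S using sum_pos_set[OF finS[OF that(1)] that(2)] p_pos that(1) by auto
  have alow: "\<alpha> * sum p W \<le> sum b W" if "W \<in> {VV i, VV' i, VV j, VV' j}" "W \<subseteq> V" "W \<noteq> {}" for W
  proof -
    have "\<alpha> \<le> sum b W / sum p W" using alpha_bd that(1) by blast
    then show ?thesis using pVpos[OF that(2,3)] by (simp add: pos_le_divide_eq mult.commute)
  qed
  have bi: "\<bar>F1 i - F0 i\<bar> \<le> \<Delta>"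
  proof -
    define X where "X = VV i - Vij"
    have XY: "X \<inter> Vij = {}" "X \<union> Vij = VV i" unfolding X_def using Vij(2) by auto
    have XV: "X \<subseteq> V" using subV(1)[OF ij(1)] unfolding X_def by auto
    have XVi': "X = VV' i" unfolding X_def Vi' ..
    note os = one_side[OF finS[OF XV] finS[OF VijV] XY(1) Vi'ne[folded XVi'] Vij(1), of a b p]
    have abXY: "\<forall>v\<in>X \<union> Vij. 0 \<le> a v \<and> a v \<le> b v \<and> b v \<le> p v \<and> b v > 0" using ab XV VijV by blast
    note os = os[OF abXY, unfolded XY(2)]
    have q: "sum b Vij / sum b X \<le> c" unfolding c_def
    proof (rule factor_bound[OF os(4) os(5)])
      show "\<alpha> * sum p X \<le> sum b X" using alow[of X] XVi' XV Vi'ne by auto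
      show "(1 - \<epsilon>) * T \<le> sum p X" using Pbal' ij(1) XVi' by auto
      have "sum p (VV i) = sum p X + sum p Vij" using sum.union_disjoint[OF finS[OF XV] finS[OF VijV] XY(1)] XY(2) by simp
      moreover have "sum p (VV i) \<le> (1 + \<epsilon>) * T" using Pbal ij(1) by auto
      moreover have "(1 - \<epsilon>) * T \<le> sum p X" using Pbal' ij(1) XVi' by auto
      ultimately show "sum p Vij \<le> 2 * \<epsilon> * T" by (simp add: algebra_simps)
    qed (use Tpos alpha eps os(3) in auto)
    have q0: "0 \<le> sum b Vij / sum b X" using os(3,4) by simp
    have "\<bar>F1 i - F0 i\<bar> = \<bar>ratio a b X - ratio a b (VV i)\<bar>" unfolding F0_def F1_def XVi' ..
    also have "\<dots> = sum b Vij / sum b X * \<bar>ratio a b Vij - ratio a b (VV i)\<bar>"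
      unfolding os(1) abs_mult abs_of_nonneg[OF q0] by (simp add: abs_minus_commute)
    also have "\<dots> \<le> c * \<bar>ratio a b Vij - ratio a b (VV i)\<bar>" using q by (rule mult_right_mono) simp
    also have "\<dots> \<le> c * M" unfolding M_def using cpos by (intro mult_left_mono) auto
    finally show ?thesis unfolding \<Delta>_def .
  qed
  have bj: "\<bar>F1 j - F0 j\<bar> \<le> \<Delta>"
  proof -
    define X where "X = VV j"
    have XV: "X \<subseteq> V" using subV(1)[OF ij(2)] unfolding X_def by auto
    have XY: "X \<inter> Vij = {}" "X \<union> Vij = VV' j" unfolding X_def using dji Vj' by auto
    have Xne: "X \<noteq> {}" using P ij(2) unfolding X_def districting_plan_def connected_set_def by auto
    have abXY: "\<forall>v\<in>X \<union> Vij. 0 \<le> a v \<and> a v \<le> b v \<and> b v \<le> p v \<and> b v > 0" using ab XV VijV by blast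
    note os = one_side[OF finS[OF XV] finS[OF VijV] XY(1) Xne Vij(1) abXY, unfolded XY(2)]
    have Z: "VV' j \<subseteq> V" "VV' j \<noteq> {}" using subV(2)[OF ij(2)] XY(2) Vij(1) by auto
    have bZ: "sum b (VV' j) > 0" using sum_pos_set[OF finS[OF Z(1)] Z(2)] ab Z(1) by auto
    have q: "sum b Vij / sum b (VV' j) \<le> c" unfolding c_def
    proof (rule factor_bound[OF os(4) os(5)])
      show "\<alpha> * sum p (VV' j) \<le> sum b (VV' j)" using alow[of "VV' j"] Z by auto
      show "(1 - \<epsilon>) * T \<le> sum p (VV' j)" using Pbal' ij(2) by auto
      have "sum p (VV' j) = sum p X + sum p Vij" using sum.union_disjoint[OF finS[OF XV] finS[OF VijV] XY(1)] XY(2) by simp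
      moreover have "sum p (VV' j) \<le> (1 + \<epsilon>) * T" using Pbal' ij(2) by auto
      moreover have "(1 - \<epsilon>) * T \<le> sum p X" using Pbal ij(2) unfolding X_def by auto
      ultimately show "sum p Vij \<le> 2 * \<epsilon> * T" by (simp add: algebra_simps)
    qed (use Tpos alpha eps bZ in auto)
    have q0: "0 \<le> sum b Vij / sum b (VV' j)" using os(4) bZ by simp
    have "\<bar>F1 j - F0 j\<bar> = \<bar>ratio a b (VV' j) - ratio a b X\<bar>" unfolding F0_def F1_def X_def ..
    also have "\<dots> = sum b Vij / sum b (VV' j) * \<bar>ratio a b Vij - ratio a b X\<bar>"
      by (simp only: os(2) abs_mult abs_of_nonneg[OF q0])
    also have "\<dots> = sum b Vij / sum b (VV' j) * \<bar>ratio a b Vij - ratio a b (VV j)\<bar>" unfolding X_def ..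
    also have "\<dots> \<le> c * \<bar>ratio a b Vij - ratio a b (VV j)\<bar>" using q by (rule mult_right_mono) simp
    also have "\<dots> \<le> c * M" unfolding M_def using cpos by (intro mult_left_mono) auto
    finally show ?thesis unfolding \<Delta>_def .
  qed
  have Dl: "\<forall>v\<in>H. \<bar>F1 v - F0 v\<bar> \<le> \<Delta>"
  proof
    fix v assume v: "v \<in> H"
    show "\<bar>F1 v - F0 v\<bar> \<le> \<Delta>"
    proof (cases "v = i \<or> v = j")
      case True then show ?thesis using bi bj by auto
    next
      case False
      then have "VV' v = VV v" using Vm' v unfolding H_def by auto
      then show ?thesis unfolding F0_def F1_def using D0 by simp
    qed
  qed
  interpret CH H "dual_adj E VV" F0 F1 \<Delta> using finH sym1 Dl D0 by unfold_locales
  have st: "bottleneck (pd0 H (dual_adj E VV) F0) (pd0 H (dual_adj E VV) F1) \<le> ereal \<Delta>" by (rule stability)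
  have "pd0 H (dual_adj E VV') F1 = pd0 H (dual_adj E VV) F1"
    using pd0_cong[OF finH sym2 sym1] iso unfolding H_def by auto
  then show ?thesis using st unfolding H_def F0_def F1_def \<Delta>_def c_def M_def by simp
qed

end
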